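(* Assume Hypothesis C. Let $\hat s\in S$ be a multi-state, $L$ a labeling, and $\pi$ the priority rule keyed to $L$. Then the Evaluator (for $\hat s$, $L$, $\pi$) terminates with $V=V^{\pi}(\hat s)$.
   Context: There are $K$ bandits with pairwise disjoint finite nonempty state sets $N_1,\dots,N_K$; $N=N_1\cup\dots\cup N_K$; $b(j)$ is the $k$ with $j\in N_k$. Bandit $k$ has real transition rates $q(i,j)$ ($i,j\in N_k$) forming $q^k$ and real rewards $r(i)$ forming $r^k$. A multi-state $s$ contains exactly one state $s_k$ of each $N_k$; $S$ is the set of multi-states; $s_{\setminus k}=s\setminus\{s_k\}$. For a map $\delta:S\to\{1,\dots,K\}$ (stationary nonrandomized policy): $Q^{\delta}(s,t)=q(s_{\delta(s)},j)$ if $t=s_{\setminus\delta(s)}\cup\{j\}$ with $j\in N_{\delta(s)}$, else $0$; $R^{\delta}(s)=r(s_{\delta(s)})$; $V^{\delta}=(I-Q^{\delta})^{-1}R^{\delta}$. A matrix is transient if its powers tend to $0$ entrywise. Hypothesis C: each $q^k$ is entrywise nonnegative and transient, and at least one of: (RN) each $q^k$ is substochastic; (RA) $r(i)\le0$ for all $i\in N$; (RS) $r(i)\ge0$ for all $i\in N$. A labeling is an injective $L:N\cup\{0\}\to\{1,\dots,|N|+1\}$ with $L(0)=|N|+1$; the priority rule keyed to $L$ is $\pi(s)=\arg\min_k L(s_k)$. Finalized data: for each bandit $k$, start with the tableau $[(I-q^k),r^k]$ and $M=N_k$, writing the current tableau as $[(I-q),r]$; while $M\ne\emptyset$, let $i\in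 M$ minimize $L(i)$, multiply row $i$ by $1/[1-q(i,i)]$, for each $j\in M\setminus\{i\}$ add $q(j,i)$ (current value) times the updated row $i$ to row $j$, and remove $i$ from $M$. The final tableau $[(I-\tilde q^k),\tilde r^k]$ gives the finalized data $\tilde q(i,j),\tilde r(i)$. Evaluator: For each bandit $p$ define the vector $y^p\in\mathbb R^{N_p}$ by $y^p(j)=1$ if $j=\hat s_p$ and $y^p(j)=0$ otherwise. Set $V=0$. For $n=1,2,\dots,|N|$: let $i$ be the state with $L(i)=n$ and $k=b(i)$; replace $V$ by $V+\tilde r(i)\,y^k(i)\prod_{p\ne k}\big[\sum_{j\in N_p}y^p(j)\big]$; then for each $j\in N_k\setminus\{i\}$ replace $y^k(j)$ by $y^k(j)+y^k(i)\tilde q(i,j)$, and then set $y^k(i)=0$ (no other $y^p$ changes). *)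

theory Defs
  imports Complex_Main
begin

definition idm :: "'b \<Rightarrow> 'b \<Rightarrow> real" where
  "idm s t = (if s = t then 1 else 0)"

definition mmult :: "'b set \<Rightarrow> ('b \<Rightarrow> 'b \<Rightarrow> real) \<Rightarrow> ('b \<Rightarrow> 'b \<Rightarrow> real) \<Rightarrow> 'b \<Rightarrow> 'b \<Rightarrow> real" where
  "mmult X A B s t = (\<Sum>u\<in>X. A s u * B u t)"

fun mpow :: "'b set \<Rightarrow> ('b \<Rightarrow> 'b \<Rightarrow> real) \<Rightarrow> nat \<Rightarrow> 'b \<Rightarrow> 'b \<Rightarrow> real" where
  "mpow X A 0 = idm"
| "mpow X A (Suc n) = mmult X (mpow X A n) A"

definition transient :: "'b set \<Rightarrow> ('b \<Rightarrow> 'b \<Rightarrow> real) \<Rightarrow> bool" where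
  "transient X A = (\<forall>i\<in>X. \<forall>j\<in>X. (\<lambda>n. mpow X A n i j) \<longlonglongrightarrow> 0)"

definition substochastic :: "'b set \<Rightarrow> ('b \<Rightarrow> 'b \<Rightarrow> real) \<Rightarrow> bool" where
  "substochastic X A = ((\<forall>i\<in>X. \<forall>j\<in>X. 0 \<le> A i j) \<and> (\<forall>i\<in>X. (\<Sum>j\<in>X. A i j) \<le> 1))"

definition is_minverse :: "'b set \<Rightarrow> ('b \<Rightarrow> 'b \<Rightarrow> real) \<Rightarrow> ('b \<Rightarrow> 'b \<Rightarrow> real) \<Rightarrow> bool" where
  "is_minverse X A B = (\<forall>s\<in>X. \<forall>t\<in>X. mmult X A B s t = idm s t \<and> mmult X B A s t = idm s t)"

definition minvertible :: "'b set \<Rightarrow> ('b \<Rightarrow> 'b \<Rightarrow> real) \<Rightarrow> bool" where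
  "minvertible X A = (\<exists>B. is_minverse X A B)"

definition minv :: "'b set \<Rightarrow> ('b \<Rightarrow> 'b \<Rightarrow> real) \<Rightarrow> 'b \<Rightarrow> 'b \<Rightarrow> real" where
  "minv X A = (SOME B. is_minverse X A B)"

text \<open>Bandits are indexed by k \<in> {1..K}; N k is the state set of bandit k.\<close>

definition Nall :: "nat \<Rightarrow> (nat \<Rightarrow> 'a set) \<Rightarrow> 'a set" where
  "Nall K N = (\<Union>k\<in>{1..K}. N k)"

definition bidx :: "nat \<Rightarrow> (nat \<Rightarrow> 'a set) \<Rightarrow> 'a \<Rightarrow> nat" where
  "bidx K N j = (THE k. k \<in> {1..K} \<and> j \<in> N k)"

definition comp :: "(nat \<Rightarrow> 'a set) \<Rightarrow> 'a set \<Rightarrow> nat \<Rightarrow> 'a" where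
  "comp N s k = (THE x. x \<in> s \<and> x \<in> N k)"

definition multistates :: "nat \<Rightarrow> (nat \<Rightarrow> 'a set) \<Rightarrow> 'a set set" where
  "multistates K N = {s. s \<subseteq> Nall K N \<and> (\<forall>k\<in>{1..K}. \<exists>!x. x \<in> s \<and> x \<in> N k)}"

definition Qpol :: "(nat \<Rightarrow> 'a set) \<Rightarrow> ('a \<Rightarrow> 'a \<Rightarrow> real) \<Rightarrow> ('a set \<Rightarrow> nat)
    \<Rightarrow> 'a set \<Rightarrow> 'a set \<Rightarrow> real" where
  "Qpol N q \<delta> s t =
    (let k = \<delta> s; i = comp N s k in
     if (\<exists>j\<in>N k. t = insert j (s - {i}))
     then q i (THE j. j \<in> N k \<and> t = insert j (s - {i}))
     else 0)"

definition Rpol :: "(nat \<Rightarrow> 'a set) \<Rightarrow> ('a \<Rightarrow> real) \<Rightarrow> ('a set \<Rightarrow> nat) \<Rightarrow> 'a set \<Rightarrow> real" where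
  "Rpol N r \<delta> s = r (comp N s (\<delta> s))"

definition Vpol :: "nat \<Rightarrow> (nat \<Rightarrow> 'a set) \<Rightarrow> ('a \<Rightarrow> 'a \<Rightarrow> real) \<Rightarrow> ('a \<Rightarrow> real)
    \<Rightarrow> ('a set \<Rightarrow> nat) \<Rightarrow> 'a set \<Rightarrow> real" where
  "Vpol K N q r \<delta> s =
    (\<Sum>t\<in>multistates K N.
       minv (multistates K N) (\<lambda>u v. idm u v - Qpol N q \<delta> u v) s t * Rpol N r \<delta> t)"

definition hypC :: "nat \<Rightarrow> (nat \<Rightarrow> 'a set) \<Rightarrow> ('a \<Rightarrow> 'a \<Rightarrow> real) \<Rightarrow> ('a \<Rightarrow> real) \<Rightarrow> bool" where
  "hypC K N q r =
    ((\<forall>k\<in>{1..K}. (\<forall>i\<in>N k. \<forall>j\<in>N k. 0 \<le> q i j) \<and> transient (N k) q) \<and>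
     ((\<forall>k\<in>{1..K}. substochastic (N k) q) \<or>
      (\<forall>i\<in>Nall K N. r i \<le> 0) \<or>
      (\<forall>i\<in>Nall K N. r i \<ge> 0)))"

text \<open>The extra label argument None plays the role of the state 0.\<close>
definition labeling :: "nat \<Rightarrow> (nat \<Rightarrow> 'a set) \<Rightarrow> ('a option \<Rightarrow> nat) \<Rightarrow> bool" where
  "labeling K N L =
    (inj_on L (insert None (Some ` Nall K N)) \<and>
     L ` (insert None (Some ` Nall K N)) \<subseteq> {1..card (Nall K N) + 1} \<and>
     L None = card (Nall K N) + 1)"

definition priority :: "nat \<Rightarrow> (nat \<Rightarrow> 'a set) \<Rightarrow> ('a option \<Rightarrow> nat) \<Rightarrow> 'a set \<Rightarrow> nat" where
  "priority K N L s = (ARG_MIN (\<lambda>k. L (Some (comp N s k))) k. k \<in> {1..K})"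

text \<open>A tableau [A, c] with A = I - q; the current q is recovered as curq A.\<close>
definition curq :: "('a \<Rightarrow> 'a \<Rightarrow> real) \<Rightarrow> 'a \<Rightarrow> 'a \<Rightarrow> real" where
  "curq A i j = idm i j - A i j"

definition pivot :: "'a set \<Rightarrow> 'a \<Rightarrow> ('a \<Rightarrow> 'a \<Rightarrow> real) \<times> ('a \<Rightarrow> real)
    \<Rightarrow> ('a \<Rightarrow> 'a \<Rightarrow> real) \<times> ('a \<Rightarrow> real)" where
  "pivot M i T =
    (let A = fst T; c = snd T; a = 1 / (1 - curq A i i);
         Ai = (\<lambda>l. a * A i l); ci = a * c i
     in ((\<lambda>j l. if j = i then Ai l
                else if j \<in> M - {i} then A j l + curq A j i * Ai l
                else A j l),
         (\<lambda>j. if j = i then ci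
              else if j \<in> M - {i} then c j + curq A j i * ci
              else c j)))"

text \<open>The while loop; the fuel argument n equals card M at the start, so the loop
  runs exactly until M is empty.\<close>
fun finloop :: "('a option \<Rightarrow> nat) \<Rightarrow> nat \<Rightarrow> 'a set \<Rightarrow> ('a \<Rightarrow> 'a \<Rightarrow> real) \<times> ('a \<Rightarrow> real)
    \<Rightarrow> ('a \<Rightarrow> 'a \<Rightarrow> real) \<times> ('a \<Rightarrow> real)" where
  "finloop L 0 M T = T"
| "finloop L (Suc n) M T =
    (let i = (ARG_MIN (\<lambda>i. L (Some i)) i. i \<in> M) in finloop L n (M - {i}) (pivot M i T))"

definition fin_tab :: "(nat \<Rightarrow> 'a set) \<Rightarrow> ('a \<Rightarrow> 'a \<Rightarrow> real) \<Rightarrow> ('a \<Rightarrow> real)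
    \<Rightarrow> ('a option \<Rightarrow> nat) \<Rightarrow> nat \<Rightarrow> ('a \<Rightarrow> 'a \<Rightarrow> real) \<times> ('a \<Rightarrow> real)" where
  "fin_tab N q r L k = finloop L (card (N k)) (N k) ((\<lambda>i j. idm i j - q i j), r)"

definition qtil :: "nat \<Rightarrow> (nat \<Rightarrow> 'a set) \<Rightarrow> ('a \<Rightarrow> 'a \<Rightarrow> real) \<Rightarrow> ('a \<Rightarrow> real)
    \<Rightarrow> ('a option \<Rightarrow> nat) \<Rightarrow> 'a \<Rightarrow> 'a \<Rightarrow> real" where
  "qtil K N q r L i j = curq (fst (fin_tab N q r L (bidx K N i))) i j"

definition rtil :: "nat \<Rightarrow> (nat \<Rightarrow> 'a set) \<Rightarrow> ('a \<Rightarrow> 'a \<Rightarrow> real) \<Rightarrow> ('a \<Rightarrow> real)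
    \<Rightarrow> ('a option \<Rightarrow> nat) \<Rightarrow> 'a \<Rightarrow> real" where
  "rtil K N q r L i = snd (fin_tab N q r L (bidx K N i)) i"

text \<open>The vectors y^p are stored in one function y on N (the N_p are disjoint).\<close>
definition evstep :: "nat \<Rightarrow> (nat \<Rightarrow> 'a set) \<Rightarrow> ('a \<Rightarrow> 'a \<Rightarrow> real) \<Rightarrow> ('a \<Rightarrow> real)
    \<Rightarrow> ('a option \<Rightarrow> nat) \<Rightarrow> nat \<Rightarrow> real \<times> ('a \<Rightarrow> real) \<Rightarrow> real \<times> ('a \<Rightarrow> real)" where
  "evstep K N qt rt L n st =
    (let V = fst st; y = snd st;
         i = (THE i. i \<in> Nall K N \<and> L (Some i) = n); k = bidx K N i;
         V' = V + rt i * y i * (\<Prod>p\<in>{1..K} - {k}. \<Sum>j\<in>N p. y j);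
         y' = (\<lambda>j. if j \<in> N k - {i} then y j + y i * qt i j
                   else if j = i then 0 else y j)
     in (V', y'))"

definition evaluator :: "nat \<Rightarrow> (nat \<Rightarrow> 'a set) \<Rightarrow> ('a \<Rightarrow> 'a \<Rightarrow> real) \<Rightarrow> ('a \<Rightarrow> real)
    \<Rightarrow> ('a option \<Rightarrow> nat) \<Rightarrow> 'a set \<Rightarrow> real" where
  "evaluator K N q r L shat =
    fst (fold (evstep K N (qtil K N q r L) (rtil K N q r L) L) [1..<card (Nall K N) + 1]
          (0, (\<lambda>j. if j \<in> shat then 1 else 0)))"

end

theory Submission
  imports Defs "HOL-Library.FuncSet"
begin



lemma idm_sum_left: "finite X \<Longrightarrow> s \<in> X \<Longrightarrow> (\<Sum>u\<in>X. idm s u * F u) = F s"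
proof -
  assume "finite X" "s \<in> X"
  have "(\<Sum>u\<in>X. idm s u * F u) = (\<Sum>u\<in>X. if s = u then F u else 0)"
    by (rule sum.cong) (auto simp: idm_def)
  then show ?thesis using \<open>finite X\<close> \<open>s \<in> X\<close> by simp
qed

lemma idm_sum_right: "finite X \<Longrightarrow> t \<in> X \<Longrightarrow> (\<Sum>u\<in>X. F u * idm u t) = F t"
proof -
  assume "finite X" "t \<in> X"
  have "(\<Sum>u\<in>X. F u * idm u t) = (\<Sum>u\<in>X. if u = t then F u else 0)"
    by (rule sum.cong) (auto simp: idm_def)
  then show ?thesis using \<open>finite X\<close> \<open>t \<in> X\<close> by simp
qed

lemma mmult_assoc: "mmult X (mmult X A B) C s t = mmult X A (mmult X B C) s t"
proof -
  have "mmult X (mmult X A B) C s t = (\<Sum>u\<in>X. \<Sum>w\<in>X. A s w * B w u * C u t)"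
    unfolding mmult_def by (simp add: sum_distrib_right)
  also have "\<dots> = (\<Sum>w\<in>X. \<Sum>u\<in>X. A s w * B w u * C u t)" by (rule sum.swap)
  also have "\<dots> = mmult X A (mmult X B C) s t"
    unfolding mmult_def by (simp add: sum_distrib_left mult.assoc)
  finally show ?thesis .
qed

lemma mpow_commute:
  assumes "finite X" "s \<in> X" "t \<in> X"
  shows "mmult X A (mpow X A n) s t = mpow X A (Suc n) s t"
  using assms(3)
proof (induction n arbitrary: t)
  case 0
  then show ?case using assms
    by (simp add: mmult_def idm_sum_right idm_sum_left)
next
  case (Suc n)
  have "mmult X A (mpow X A (Suc n)) s t = mmult X (mmult X A (mpow X A n)) A s t"
    by (simp add: mmult_assoc)
  also have "\<dots> = (\<Sum>u\<in>X. mmult X A (mpow X A n) s u * A u t)"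
    by (simp only: mmult_def[of X "mmult X A (mpow X A n)" A])
  also have "\<dots> = (\<Sum>u\<in>X. mpow X A (Suc n) s u * A u t)"
    using Suc.IH by (intro sum.cong refl) simp
  also have "\<dots> = mmult X (mpow X A (Suc n)) A s t"
    by (simp only: mmult_def[of X "mpow X A (Suc n)" A])
  finally show ?case by simp
qed

lemma mpow_nonneg:
  assumes "\<forall>s\<in>X. \<forall>t\<in>X. 0 \<le> A s t" "s \<in> X" "t \<in> X"
  shows "0 \<le> mpow X A n s t"
  using assms(3)
proof (induction n arbitrary: t)
  case 0 then show ?case by (simp add: idm_def)
next
  case (Suc n) then show ?case using assms
    by (auto simp: mmult_def intro!: sum_nonneg mult_nonneg_nonneg)
qed

lemma mpow_bound:
  assumes fin: "finite X" and nn: "\<forall>s\<in>X. \<forall>t\<in>X. 0 \<le> A s t"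
    and vpos: "\<forall>s\<in>X. 0 < v s"
    and Av: "\<forall>s\<in>X. (\<Sum>t\<in>X. A s t * v t) \<le> \<rho> * v s" and rho: "0 \<le> \<rho>"
    and s: "s \<in> X"
  shows "(\<Sum>t\<in>X. mpow X A n s t * v t) \<le> \<rho> ^ n * v s"
proof (induction n)
  case 0 then show ?case using fin s by (simp add: idm_sum_left)
next
  case (Suc n)
  have "(\<Sum>t\<in>X. mpow X A (Suc n) s t * v t) = (\<Sum>t\<in>X. \<Sum>u\<in>X. mpow X A n s u * A u t * v t)"
    by (simp add: mmult_def sum_distrib_right)
  also have "\<dots> = (\<Sum>u\<in>X. \<Sum>t\<in>X. mpow X A n s u * A u t * v t)" by (rule sum.swap)
  also have "\<dots> = (\<Sum>u\<in>X. mpow X A n s u * (\<Sum>t\<in>X. A u t * v t))"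
    by (simp add: sum_distrib_left mult.assoc)
  finally have "(\<Sum>t\<in>X. mpow X A (Suc n) s t * v t) = (\<Sum>u\<in>X. mpow X A n s u * (\<Sum>t\<in>X. A u t * v t))" .
  also have "\<dots> \<le> (\<Sum>u\<in>X. mpow X A n s u * (\<rho> * v u))"
    using Av mpow_nonneg[OF nn s] by (intro sum_mono mult_left_mono) auto
  also have "\<dots> = \<rho> * (\<Sum>u\<in>X. mpow X A n s u * v u)"
    by (simp add: sum_distrib_left algebra_simps)
  also have "\<dots> \<le> \<rho> * (\<rho> ^ n * v s)" using Suc rho by (rule mult_left_mono)
  finally show ?case by simp
qed

lemma mpow_entry_bound:
  assumes fin: "finite X" and nn: "\<forall>s\<in>X. \<forall>t\<in>X. 0 \<le> A s t"
    and vpos: "\<forall>s\<in>X. 0 < v s"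
    and Av: "\<forall>s\<in>X. (\<Sum>t\<in>X. A s t * v t) \<le> \<rho> * v s" and rho: "0 \<le> \<rho>"
    and s: "s \<in> X" and t: "t \<in> X"
  shows "mpow X A n s t \<le> \<rho> ^ n * (v s / v t)"
proof -
  have "mpow X A n s t * v t \<le> (\<Sum>t\<in>X. mpow X A n s t * v t)"
    using fin t mpow_nonneg[OF nn s] vpos
    by (intro member_le_sum) (auto intro!: mult_nonneg_nonneg simp: less_imp_le)
  also have "\<dots> \<le> \<rho> ^ n * v s" by (rule mpow_bound[OF assms(1-6)])
  finally show ?thesis using vpos t by (simp add: field_simps)
qed

lemma mpow_summable:
  assumes fin: "finite X" and nn: "\<forall>s\<in>X. \<forall>t\<in>X. 0 \<le> A s t"
    and vpos: "\<forall>s\<in>X. 0 < v s"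
    and Av: "\<forall>s\<in>X. (\<Sum>t\<in>X. A s t * v t) \<le> \<rho> * v s" and rho: "0 \<le> \<rho>" "\<rho> < 1"
    and s: "s \<in> X" and t: "t \<in> X"
  shows "summable (\<lambda>n. mpow X A n s t)"
proof (rule summable_comparison_test)
  show "\<exists>N. \<forall>n\<ge>N. norm (mpow X A n s t) \<le> \<rho> ^ n * (v s / v t)"
    using mpow_entry_bound[OF fin nn vpos Av rho(1) s t] mpow_nonneg[OF nn s t] by auto
  show "summable (\<lambda>n. \<rho> ^ n * (v s / v t))"
    using rho by (intro summable_mult2 summable_geometric) auto
qed

lemma neumann:
  assumes fin: "finite X" and nn: "\<forall>s\<in>X. \<forall>t\<in>X. 0 \<le> A s t"
    and vpos: "\<forall>s\<in>X. 0 < v s"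
    and Av: "\<forall>s\<in>X. (\<Sum>t\<in>X. A s t * v t) \<le> \<rho> * v s" and rho: "0 \<le> \<rho>" "\<rho> < 1"
  shows "is_minverse X (\<lambda>u w. idm u w - A u w) (\<lambda>s t. suminf (\<lambda>n. mpow X A n s t))"
proof -
  note sm = mpow_summable[OF fin nn vpos Av rho]
  define B where "B = (\<lambda>s t. suminf (\<lambda>n. mpow X A n s t))"
  have split: "B s t = (\<Sum>n. mpow X A (Suc n) s t) + idm s t" if "s \<in> X" "t \<in> X" for s t
    using suminf_split_head[OF sm[OF that]] unfolding B_def by simp
  have 1: "mmult X B (\<lambda>u w. idm u w - A u w) s t = idm s t" if st: "s \<in> X" "t \<in> X" for s t
  proof -
    have "mmult X B (\<lambda>u w. idm u w - A u w) s t = B s t - (\<Sum>u\<in>X. B s u * A u t)"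
      unfolding mmult_def using fin st by (simp add: right_diff_distrib sum_subtractf idm_sum_right)
    also have "(\<Sum>u\<in>X. B s u * A u t) = (\<Sum>u\<in>X. \<Sum>n. mpow X A n s u * A u t)"
      unfolding B_def using sm st by (intro sum.cong refl suminf_mult2) auto
    also have "\<dots> = (\<Sum>n. \<Sum>u\<in>X. mpow X A n s u * A u t)"
      using sm st by (intro suminf_sum[symmetric] summable_mult2) auto
    also have "\<dots> = (\<Sum>n. mpow X A (Suc n) s t)" by (simp only: mpow.simps mmult_def)
    finally show ?thesis using split[OF st] by simp
  qed
  have 2: "mmult X (\<lambda>u w. idm u w - A u w) B s t = idm s t" if st: "s \<in> X" "t \<in> X" for s t
  proof -
    have "mmult X (\<lambda>u w. idm u w - A u w) B s t = B s t - (\<Sum>u\<in>X. A s u * B u t)"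
      unfolding mmult_def using fin st by (simp add: left_diff_distrib sum_subtractf idm_sum_left)
    also have "(\<Sum>u\<in>X. A s u * B u t) = (\<Sum>u\<in>X. \<Sum>n. A s u * mpow X A n u t)"
      unfolding B_def using sm st by (intro sum.cong refl suminf_mult[symmetric]) auto
    also have "\<dots> = (\<Sum>n. \<Sum>u\<in>X. A s u * mpow X A n u t)"
      using sm st by (intro suminf_sum[symmetric] summable_mult) auto
    also have "\<dots> = (\<Sum>n. mpow X A (Suc n) s t)"
    proof -
      have "(\<Sum>u\<in>X. A s u * mpow X A n u t) = mpow X A (Suc n) s t" for n
        using mpow_commute[OF fin st, of A n] by (simp only: mmult_def[of X A "mpow X A n"])
      then show ?thesis by simp
    qed
    finally show ?thesis using split[OF st] by simp
  qed
  show ?thesis using 1 2 unfolding is_minverse_def B_def by auto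
qed




lemma transient_w:
  assumes fin: "finite X" and ne: "X \<noteq> {}" and nn: "\<forall>i\<in>X. \<forall>j\<in>X. 0 \<le> q i j"
    and tr: "transient X q"
  shows "\<exists>w. (\<forall>j\<in>X. 1 \<le> w j) \<and> (\<forall>j\<in>X. (\<Sum>l\<in>X. q j l * w l) \<le> w j - 1/2)"
proof -
  define eps where "eps = 1 / (2 * real (card X))"
  have cpos: "card X > 0" using fin ne by (simp add: card_gt_0_iff)
  have epos: "eps > 0" unfolding eps_def using cpos by simp
  have "\<forall>\<^sub>F n in sequentially. \<forall>i\<in>X. \<forall>j\<in>X. mpow X q n i j < eps"
    using tr epos fin unfolding transient_def
    by (intro eventually_ball_finite ballI) (auto dest: order_tendstoD(2))
  then obtain N0 where N0: "\<And>n. n \<ge> N0 \<Longrightarrow> \<forall>i\<in>X. \<forall>j\<in>X. mpow X q n i j < eps"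
    by (auto simp: eventually_sequentially)
  define N where "N = Suc N0"
  define R where "R j n = (\<Sum>m\<in>X. mpow X q n j m)" for j n
  define w where "w j = (\<Sum>n<N. R j n)" for j
  have R0: "R j 0 = 1" if "j \<in> X" for j
    unfolding R_def using idm_sum_left[OF fin that, of "\<lambda>_. 1"] by simp
  have Rnn: "R j n \<ge> 0" if "j \<in> X" for j n
    unfolding R_def using mpow_nonneg[OF nn that] by (auto intro: sum_nonneg)
  have RN: "R j N \<le> 1/2" if "j \<in> X" for j
  proof -
    have "R j N \<le> (\<Sum>m\<in>X. eps)" unfolding R_def
      using N0[of N] that by (intro sum_mono) (auto simp: N_def less_imp_le)
    also have "\<dots> = 1/2" unfolding eps_def using cpos by simp
    finally show ?thesis .
  qed
  have w1: "1 \<le> w j" if "j \<in> X" for j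
  proof -
    have "w j = R j 0 + (\<Sum>n<N0. R j (Suc n))" unfolding w_def N_def
      by (rule sum.lessThan_Suc_shift)
    moreover have "(\<Sum>n<N0. R j (Suc n)) \<ge> 0" using Rnn[OF that] by (intro sum_nonneg) auto
    ultimately show ?thesis using R0[OF that] by simp
  qed
  have qw: "(\<Sum>l\<in>X. q j l * w l) \<le> w j - 1/2" if j: "j \<in> X" for j
  proof -
    have "(\<Sum>l\<in>X. q j l * w l) = (\<Sum>l\<in>X. \<Sum>n<N. \<Sum>m\<in>X. q j l * mpow X q n l m)"
      unfolding w_def R_def by (simp add: sum_distrib_left)
    also have "\<dots> = (\<Sum>n<N. \<Sum>l\<in>X. \<Sum>m\<in>X. q j l * mpow X q n l m)"
      by (rule sum.swap)
    also have "\<dots> = (\<Sum>n<N. \<Sum>m\<in>X. \<Sum>l\<in>X. q j l * mpow X q n l m)"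
      by (rule sum.cong[OF refl], rule sum.swap)
    also have "\<dots> = (\<Sum>n<N. R j (Suc n))"
    proof (rule sum.cong[OF refl])
      fix n
      have "(\<Sum>l\<in>X. q j l * mpow X q n l m) = mpow X q (Suc n) j m" if "m \<in> X" for m
        using mpow_commute[OF fin j that, of q n] by (simp only: mmult_def[of X q "mpow X q n"])
      then show "(\<Sum>m\<in>X. \<Sum>l\<in>X. q j l * mpow X q n l m) = R j (Suc n)"
        unfolding R_def by (intro sum.cong) auto
    qed
    also have "\<dots> = w j + R j N - R j 0"
    proof -
      have "(\<Sum>n<Suc N. R j n) = w j + R j N" unfolding w_def by simp
      moreover have "(\<Sum>n<Suc N. R j n) = R j 0 + (\<Sum>n<N. R j (Suc n))"
        by (rule sum.lessThan_Suc_shift)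
      ultimately show ?thesis by simp
    qed
    finally show ?thesis using R0[OF j] RN[OF j] by simp
  qed
  show ?thesis using w1 qw by blast
qed




locale bandits =
  fixes K :: nat and N :: "nat \<Rightarrow> 'a set"
  assumes K: "K \<ge> 1"
    and fin: "\<forall>k\<in>{1..K}. finite (N k) \<and> N k \<noteq> {}"
    and disj: "\<forall>k\<in>{1..K}. \<forall>l\<in>{1..K}. k \<noteq> l \<longrightarrow> N k \<inter> N l = {}"
begin

abbreviation "I \<equiv> {1..K}"
abbreviation "S \<equiv> multistates K N"

lemma finN: "k \<in> I \<Longrightarrow> finite (N k)" using fin by auto

lemma disjD: "k \<in> I \<Longrightarrow> l \<in> I \<Longrightarrow> x \<in> N k \<Longrightarrow> x \<in> N l \<Longrightarrow> k = l"
  using disj by blast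

lemma finNall: "finite (Nall K N)" unfolding Nall_def using fin by auto

lemma bidx_eq: "k \<in> I \<Longrightarrow> j \<in> N k \<Longrightarrow> bidx K N j = k"
  unfolding bidx_def using disjD by (intro the_equality) auto

lemma Nall_iff: "x \<in> Nall K N \<longleftrightarrow> (\<exists>k\<in>I. x \<in> N k)" unfolding Nall_def by auto

lemma comp_props:
  assumes "s \<in> S" "k \<in> I" shows "comp N s k \<in> s \<and> comp N s k \<in> N k"
proof -
  from assms obtain x where "x \<in> s \<and> x \<in> N k" "\<And>y. y \<in> s \<and> y \<in> N k \<Longrightarrow> y = x"
    unfolding multistates_def by blast
  then show ?thesis unfolding comp_def by (metis (mono_tags, lifting) theI)
qed

lemma comp_eq:
  assumes "s \<in> S" "k \<in> I" "x \<in> s" "x \<in> N k" shows "comp N s k = x"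
proof -
  from assms(1,2) obtain y where "y \<in> s \<and> y \<in> N k" "\<And>z. z \<in> s \<and> z \<in> N k \<Longrightarrow> z = y"
    unfolding multistates_def by blast
  then show ?thesis unfolding comp_def using assms by (intro the_equality) auto
qed

lemma S_elem:
  assumes "s \<in> S" "x \<in> s" shows "\<exists>k\<in>I. x \<in> N k \<and> x = comp N s k"
proof -
  have "x \<in> Nall K N" using assms unfolding multistates_def by auto
  then obtain k where "k \<in> I" "x \<in> N k" by (auto simp: Nall_iff)
  then show ?thesis using comp_eq[OF assms(1) _ assms(2)] by auto
qed

lemma S_eq: "s \<in> S \<Longrightarrow> s = (\<lambda>k. comp N s k) ` I"
  using S_elem comp_props by fastforce

lemma finS: "finite S"
proof -
  have "S \<subseteq> Pow (Nall K N)" unfolding multistates_def by auto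
  then show ?thesis using finNall by (meson finite_Pow_iff finite_subset)
qed

lemma comp_distinct:
  assumes "s \<in> S" "k \<in> I" "p \<in> I" "p \<noteq> k" shows "comp N s p \<noteq> comp N s k"
  using comp_props[OF assms(1,2)] comp_props[OF assms(1,3)] disjD assms by metis

lemma upd_S:
  assumes s: "s \<in> S" and k: "k \<in> I" and j: "j \<in> N k"
  defines "t \<equiv> insert j (s - {comp N s k})"
  shows "t \<in> S" and "\<And>p. p \<in> I \<Longrightarrow> comp N t p = (if p = k then j else comp N s p)"
proof -
  have ck: "comp N s k \<in> s" "comp N s k \<in> N k" using comp_props[OF s k] by auto
  have sub: "s \<subseteq> Nall K N" using s unfolding multistates_def by auto
  have "j \<in> Nall K N" using j k unfolding Nall_def by auto
  then have tsub: "t \<subseteq> Nall K N" using sub unfolding t_def by auto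
  have uniq: "\<exists>!x. x \<in> t \<and> x \<in> N p" if p: "p \<in> I" for p
  proof (cases "p = k")
    case True
    show ?thesis
    proof (rule ex1I[of _ j])
      show "j \<in> t \<and> j \<in> N p" using True j unfolding t_def by auto
      fix y assume "y \<in> t \<and> y \<in> N p"
      then show "y = j" using True comp_eq[OF s k] unfolding t_def by auto
    qed
  next
    case False
    have cp: "comp N s p \<in> s" "comp N s p \<in> N p" using comp_props[OF s p] by auto
    have ne: "comp N s p \<noteq> comp N s k" using comp_distinct[OF s k p False] .
    show ?thesis
    proof (rule ex1I[of _ "comp N s p"])
      show "comp N s p \<in> t \<and> comp N s p \<in> N p" using cp ne unfolding t_def by auto
      fix y assume y: "y \<in> t \<and> y \<in> N p"
      have "y \<noteq> j" using y j disjD[OF k p] False by auto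
      then have "y \<in> s" using y unfolding t_def by auto
      then show "y = comp N s p" using comp_eq[OF s p] y by auto
    qed
  qed
  show tS: "t \<in> S" unfolding multistates_def using tsub uniq by auto
  fix p assume p: "p \<in> I"
  show "comp N t p = (if p = k then j else comp N s p)"
  proof (cases "p = k")
    case True then show ?thesis using comp_eq[OF tS p, of j] j unfolding t_def by auto
  next
    case False
    have cp: "comp N s p \<in> s" "comp N s p \<in> N p" using comp_props[OF s p] by auto
    have ne: "comp N s p \<noteq> comp N s k" using comp_distinct[OF s k p False] .
    show ?thesis using False comp_eq[OF tS p, of "comp N s p"] cp ne unfolding t_def by auto
  qed
qed

lemma upd_inj:
  assumes s: "s \<in> S" and k: "k \<in> I" and j: "j \<in> N k" and j': "j' \<in> N k"
    and eq: "insert j (s - {comp N s k}) = insert j' (s - {comp N s k})"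
  shows "j = j'"
proof -
  have "comp N (insert j (s - {comp N s k})) k = (if k = k then j else comp N s k)"
    by (rule upd_S(2)[OF s k j k])
  moreover have "comp N (insert j' (s - {comp N s k})) k = (if k = k then j' else comp N s k)"
    by (rule upd_S(2)[OF s k j' k])
  ultimately show ?thesis using eq by (metis (full_types))
qed

lemma Qsum:
  assumes s: "s \<in> S" and k: "\<delta> s = k" "k \<in> I"
  shows "(\<Sum>t\<in>S. Qpol N q \<delta> s t * F t)
       = (\<Sum>j\<in>N k. q (comp N s k) j * F (insert j (s - {comp N s k})))"
proof -
  define i where "i = comp N s k"
  define up where "up j = insert j (s - {i})" for j
  have Qeq: "Qpol N q \<delta> s t = (if \<exists>j'\<in>N k. t = insert j' (s - {i})
      then q i (THE j'. j' \<in> N k \<and> t = insert j' (s - {i})) else 0)" for t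
    unfolding Qpol_def Let_def k(1) i_def by (rule refl)
  have inj: "inj_on up (N k)"
  proof (rule inj_onI)
    fix x y assume "x \<in> N k" "y \<in> N k" "up x = up y"
    then show "x = y" using upd_inj[OF s k(2)] unfolding up_def i_def by blast
  qed
  have img: "up ` N k \<subseteq> S" unfolding up_def i_def using upd_S(1)[OF s k(2)] by blast
  have Qup: "Qpol N q \<delta> s (up j) = q i j" if j: "j \<in> N k" for j
  proof -
    have ex: "\<exists>j'\<in>N k. up j = insert j' (s - {i})" using j unfolding up_def by blast
    have th: "(THE j'. j' \<in> N k \<and> up j = insert j' (s - {i})) = j"
    proof (rule the_equality)
      show "j \<in> N k \<and> up j = insert j (s - {i})" using j unfolding up_def by blast
      fix j' assume "j' \<in> N k \<and> up j = insert j' (s - {i})"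
      then show "j' = j" using upd_inj[OF s k(2) j] unfolding up_def i_def by metis
    qed
    show ?thesis unfolding Qeq using ex th by (simp only: if_True)
  qed
  have Q0: "Qpol N q \<delta> s t = 0" if "t \<in> S - up ` N k" for t
  proof -
    have "\<not> (\<exists>j'\<in>N k. t = insert j' (s - {i}))" using that unfolding up_def by blast
    then show ?thesis unfolding Qeq by (simp only: if_False)
  qed
  have "(\<Sum>t\<in>S. Qpol N q \<delta> s t * F t) = (\<Sum>t\<in>up ` N k. Qpol N q \<delta> s t * F t)"
    using Q0 finS img by (intro sum.mono_neutral_right) auto
  also have "\<dots> = (\<Sum>j\<in>N k. Qpol N q \<delta> s (up j) * F (up j))"
    using inj by (rule sum.reindex_cong) auto
  also have "\<dots> = (\<Sum>j\<in>N k. q i j * F (up j))" using Qup by (intro sum.cong) auto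
  finally show ?thesis unfolding up_def i_def .
qed

end



locale bsetup = bandits K N for K :: nat and N :: "nat \<Rightarrow> 'a set" +
  fixes q :: "'a \<Rightarrow> 'a \<Rightarrow> real" and r :: "'a \<Rightarrow> real" and L :: "'a option \<Rightarrow> nat"
  assumes qnn: "\<forall>k\<in>{1..K}. \<forall>i\<in>N k. \<forall>j\<in>N k. 0 \<le> q i j"
    and trans: "\<forall>k\<in>{1..K}. transient (N k) q"
    and lab: "labeling K N L"
begin

abbreviation "prio \<equiv> priority K N L"
abbreviation "Q \<equiv> Qpol N q prio"

lemma Linj: "x \<in> Nall K N \<Longrightarrow> y \<in> Nall K N \<Longrightarrow> L (Some x) = L (Some y) \<Longrightarrow> x = y"
  using lab unfolding labeling_def inj_on_def by blast

lemma compNall: "s \<in> S \<Longrightarrow> k \<in> I \<Longrightarrow> comp N s k \<in> Nall K N"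
  using comp_props unfolding Nall_def by blast

lemma prio_props:
  assumes "s \<in> S"
  shows "prio s \<in> I" "\<And>p. p \<in> I \<Longrightarrow> L (Some (comp N s (prio s))) \<le> L (Some (comp N s p))"
proof -
  have "1 \<in> I" using K by simp
  note A = arg_min_nat_lemma[of "\<lambda>k. k \<in> I" 1 "\<lambda>k. L (Some (comp N s k))", OF this]
  show "prio s \<in> I" using A unfolding priority_def by blast
  fix p assume "p \<in> I" then show "L (Some (comp N s (prio s))) \<le> L (Some (comp N s p))"
    using A unfolding priority_def by blast
qed

lemma prio_char:
  assumes s: "s \<in> S" and k: "k \<in> I"
    and lt: "\<And>p. p \<in> I \<Longrightarrow> p \<noteq> k \<Longrightarrow> L (Some (comp N s k)) < L (Some (comp N s p))"
  shows "prio s = k"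
proof (rule ccontr)
  assume "prio s \<noteq> k"
  then have "L (Some (comp N s k)) < L (Some (comp N s (prio s)))"
    using lt prio_props(1)[OF s] by blast
  moreover have "L (Some (comp N s (prio s))) \<le> L (Some (comp N s k))" using prio_props(2)[OF s k] .
  ultimately show False by simp
qed

lemma exists_W: "\<exists>W. \<forall>k\<in>I. (\<forall>j\<in>N k. 1 \<le> W k j) \<and> (\<forall>j\<in>N k. (\<Sum>l\<in>N k. q j l * W k l) \<le> W k j - 1/2)"
proof -
  have "\<forall>k\<in>I. \<exists>w. (\<forall>j\<in>N k. 1 \<le> w j) \<and> (\<forall>j\<in>N k. (\<Sum>l\<in>N k. q j l * w l) \<le> w j - 1/2)"
  proof
    fix k assume k: "k \<in> I"
    show "\<exists>w. (\<forall>j\<in>N k. 1 \<le> w j) \<and> (\<forall>j\<in>N k. (\<Sum>l\<in>N k. q j l * w l) \<le> w j - 1/2)"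
      using fin qnn trans k by (intro transient_w) auto
  qed
  then show ?thesis by (rule bchoice)
qed

definition Wf :: "nat \<Rightarrow> 'a \<Rightarrow> real" where
  "Wf = (SOME W. \<forall>k\<in>I. (\<forall>j\<in>N k. 1 \<le> W k j) \<and> (\<forall>j\<in>N k. (\<Sum>l\<in>N k. q j l * W k l) \<le> W k j - 1/2))"

lemma Wf: "\<forall>k\<in>I. (\<forall>j\<in>N k. 1 \<le> Wf k j) \<and> (\<forall>j\<in>N k. (\<Sum>l\<in>N k. q j l * Wf k l) \<le> Wf k j - 1/2)"
  unfolding Wf_def using exists_W by (rule someI_ex)

definition wv :: "'a \<Rightarrow> real" where "wv j = Wf (bidx K N j) j"

lemma wv_eq: "k \<in> I \<Longrightarrow> j \<in> N k \<Longrightarrow> wv j = Wf k j"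
  unfolding wv_def using bidx_eq by simp

lemma wv_ge1: "k \<in> I \<Longrightarrow> j \<in> N k \<Longrightarrow> 1 \<le> wv j"
  using Wf wv_eq by fastforce

lemma wv_q: "k \<in> I \<Longrightarrow> j \<in> N k \<Longrightarrow> (\<Sum>l\<in>N k. q j l * wv l) \<le> wv j - 1/2"
proof -
  assume k: "k \<in> I" and j: "j \<in> N k"
  have "(\<Sum>l\<in>N k. q j l * wv l) = (\<Sum>l\<in>N k. q j l * Wf k l)" using wv_eq[OF k] by simp
  moreover have "(\<Sum>l\<in>N k. q j l * Wf k l) \<le> Wf k j - 1/2" using Wf k j by blast
  ultimately show ?thesis using wv_eq[OF k j] by simp
qed

definition Wm where "Wm = Max (wv ` Nall K N)"

lemma Wm_ge: "k \<in> I \<Longrightarrow> j \<in> N k \<Longrightarrow> wv j \<le> Wm"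
proof -
  assume "k \<in> I" "j \<in> N k"
  then have "j \<in> Nall K N" unfolding Nall_def by blast
  then show ?thesis unfolding Wm_def using finNall by (intro Max_ge) auto
qed

lemma Wm_ge1: "1 \<le> Wm"
proof -
  have "1 \<in> I" using K by simp
  then obtain j where "j \<in> N 1" using fin by blast
  then show ?thesis using Wm_ge[OF \<open>1 \<in> I\<close>] wv_ge1[OF \<open>1 \<in> I\<close>] by fastforce
qed

definition vv :: "'a set \<Rightarrow> real" where "vv s = (\<Prod>p\<in>I. wv (comp N s p))"

lemma Q_nonneg: "s \<in> S \<Longrightarrow> t \<in> S \<Longrightarrow> 0 \<le> Q s t"
proof -
  assume s: "s \<in> S" and t: "t \<in> S"
  define k where "k = prio s"
  have k: "k \<in> I" using prio_props(1)[OF s] k_def by simp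
  have i: "comp N s k \<in> N k" using comp_props[OF s k] by simp
  show ?thesis
  proof (cases "\<exists>j\<in>N k. t = insert j (s - {comp N s k})")
    case True
    then obtain j where j: "j \<in> N k" "t = insert j (s - {comp N s k})" by blast
    have "(THE j'. j' \<in> N k \<and> t = insert j' (s - {comp N s k})) = j"
    proof (rule the_equality)
      show "j \<in> N k \<and> t = insert j (s - {comp N s k})" using j by blast
      fix j' assume "j' \<in> N k \<and> t = insert j' (s - {comp N s k})"
      then show "j' = j" using upd_inj[OF s k j(1)] j by metis
    qed
    then have "Q s t = q (comp N s k) j" unfolding Qpol_def Let_def k_def[symmetric] using True
      by (simp only: if_True)
    then show ?thesis using qnn k i j by auto
  next
    case False
    then have "Q s t = 0" unfolding Qpol_def Let_def k_def[symmetric] by (simp only: if_False)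
    then show ?thesis by simp
  qed
qed

lemma vv_upd:
  assumes s: "s \<in> S" and k: "k \<in> I" and j: "j \<in> N k"
  shows "vv (insert j (s - {comp N s k})) = wv j * (\<Prod>p\<in>I-{k}. wv (comp N s p))"
proof -
  have "vv (insert j (s - {comp N s k})) = (\<Prod>p\<in>I. wv (if p = k then j else comp N s p))"
    unfolding vv_def using upd_S(2)[OF s k j] by (intro prod.cong) auto
  also have "\<dots> = wv j * (\<Prod>p\<in>I-{k}. wv (if p = k then j else comp N s p))"
    using k by (subst prod.remove[of I k]) auto
  also have "(\<Prod>p\<in>I-{k}. wv (if p = k then j else comp N s p)) = (\<Prod>p\<in>I-{k}. wv (comp N s p))"
    by (intro prod.cong) auto
  finally show ?thesis .
qed

lemma prod_rest_ge1: "s \<in> S \<Longrightarrow> 1 \<le> (\<Prod>p\<in>J. wv (comp N s p))" if "J \<subseteq> I"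
  using that
proof -
  assume s: "s \<in> S"
  have "\<forall>p\<in>J. 1 \<le> wv (comp N s p)" using that comp_props[OF s] wv_ge1 by blast
  then show ?thesis by (intro prod_ge_1) blast
qed

lemma vv_pos: "s \<in> S \<Longrightarrow> 0 < vv s"
  unfolding vv_def using prod_rest_ge1[of I] by fastforce

lemma Qv:
  assumes s: "s \<in> S"
  shows "(\<Sum>t\<in>S. Q s t * vv t) \<le> (1 - 1 / (2 * Wm)) * vv s"
proof -
  define k where "k = prio s"
  have k: "k \<in> I" using prio_props(1)[OF s] k_def by simp
  define i where "i = comp N s k"
  have i: "i \<in> N k" using comp_props[OF s k] i_def by simp
  define P where "P = (\<Prod>p\<in>I-{k}. wv (comp N s p))"
  have P1: "1 \<le> P" unfolding P_def using prod_rest_ge1[OF _ s] by blast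
  have vs: "vv s = wv i * P" unfolding vv_def P_def i_def using k
    by (subst prod.remove[of I k]) auto
  have "(\<Sum>t\<in>S. Q s t * vv t) = (\<Sum>j\<in>N k. q i j * vv (insert j (s - {i})))"
    unfolding i_def by (rule Qsum[of s prio k q vv, OF s k_def[symmetric] k])
  also have "\<dots> = (\<Sum>j\<in>N k. q i j * wv j) * P"
    unfolding P_def i_def using vv_upd[OF s k] by (simp add: sum_distrib_right mult.assoc)
  also have "\<dots> \<le> (wv i - 1/2) * P" using wv_q[OF k i] P1 by (intro mult_right_mono) auto
  also have "\<dots> \<le> (1 - 1 / (2 * Wm)) * vv s"
  proof -
    have "wv i \<le> Wm" using Wm_ge[OF k i] .
    have "wv i * P / (2 * Wm) \<le> P / 2"
      using \<open>wv i \<le> Wm\<close> Wm_ge1 P1 by (simp add: field_simps mult_right_mono)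
    then show ?thesis unfolding vs by (simp add: algebra_simps)
  qed
  finally show ?thesis .
qed

lemma Q_inverse: "is_minverse S (\<lambda>u w. idm u w - Q u w) (\<lambda>s t. suminf (\<lambda>n. mpow S Q n s t))"
proof (rule neumann[OF finS])
  show "\<forall>s\<in>S. \<forall>t\<in>S. 0 \<le> Q s t" using Q_nonneg by blast
  show "\<forall>s\<in>S. 0 < vv s" using vv_pos by blast
  show "\<forall>s\<in>S. (\<Sum>t\<in>S. Q s t * vv t) \<le> (1 - 1 / (2 * Wm)) * vv s" using Qv by blast
  show "0 \<le> 1 - 1 / (2 * Wm)" using Wm_ge1 by (simp add: field_simps)
  show "1 - 1 / (2 * Wm) < 1" using Wm_ge1 by simp
qed

lemma Q_minvertible: "minvertible S (\<lambda>u w. idm u w - Q u w)"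
  unfolding minvertible_def using Q_inverse by blast

abbreviation "VV \<equiv> Vpol K N q r prio"

lemma bellman:
  assumes s: "s \<in> S"
  shows "VV s = Rpol N r prio s + (\<Sum>t\<in>S. Q s t * VV t)"
proof -
  define B where "B = minv S (\<lambda>u w. idm u w - Q u w)"
  have B: "is_minverse S (\<lambda>u w. idm u w - Q u w) B"
    unfolding B_def minv_def using Q_minvertible unfolding minvertible_def by (rule someI_ex)
  have V: "VV t = (\<Sum>u\<in>S. B t u * Rpol N r prio u)" for t unfolding Vpol_def B_def ..
  have "(\<Sum>t\<in>S. (idm s t - Q s t) * VV t) = (\<Sum>t\<in>S. \<Sum>u\<in>S. (idm s t - Q s t) * B t u * Rpol N r prio u)"
    unfolding V by (simp add: sum_distrib_left mult.assoc)
  also have "\<dots> = (\<Sum>u\<in>S. \<Sum>t\<in>S. (idm s t - Q s t) * B t u * Rpol N r prio u)" by (rule sum.swap)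
  also have "\<dots> = (\<Sum>u\<in>S. mmult S (\<lambda>u w. idm u w - Q u w) B s u * Rpol N r prio u)"
    unfolding mmult_def by (simp add: sum_distrib_right)
  also have "\<dots> = (\<Sum>u\<in>S. idm s u * Rpol N r prio u)"
    using B s unfolding is_minverse_def by (intro sum.cong) auto
  also have "\<dots> = Rpol N r prio s" using idm_sum_left[OF finS s] .
  finally have "(\<Sum>t\<in>S. (idm s t - Q s t) * VV t) = Rpol N r prio s" .
  moreover have "(\<Sum>t\<in>S. (idm s t - Q s t) * VV t) = VV s - (\<Sum>t\<in>S. Q s t * VV t)"
    using idm_sum_left[OF finS s, of VV] by (simp add: left_diff_distrib sum_subtractf)
  ultimately show ?thesis by simp
qed

lemma bellman2:
  assumes s: "s \<in> S" and k: "prio s = k"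
  shows "VV s = r (comp N s k) + (\<Sum>j\<in>N k. q (comp N s k) j * VV (insert j (s - {comp N s k})))"
proof -
  have kI: "k \<in> I" using prio_props(1)[OF s] k by simp
  show ?thesis using bellman[OF s] Qsum[of s prio k q VV, OF s k kI] unfolding Rpol_def k by simp
qed

end



lemma pivot_fst: "fst (pivot M i (A, c)) j l =
   (if j = i then (1 / (1 - curq A i i)) * A i l
    else if j \<in> M - {i} then A j l + curq A j i * ((1 / (1 - curq A i i)) * A i l) else A j l)"
  unfolding pivot_def Let_def by simp

lemma pivot_snd: "snd (pivot M i (A, c)) j =
   (if j = i then (1 / (1 - curq A i i)) * c i
    else if j \<in> M - {i} then c j + curq A j i * ((1 / (1 - curq A i i)) * c i) else c j)"
  unfolding pivot_def Let_def by simp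

lemma pivot_fst_indep: "fst (pivot M i (A, c)) = fst (pivot M i (A, c'))"
  by (intro ext) (simp only: pivot_fst)

lemma finloop_fst_indep: "fst (finloop L n M (A, c)) = fst (finloop L n M (A, c'))"
proof (induction n arbitrary: M A c c')
  case 0 then show ?case by simp
next
  case (Suc n)
  define i where "i = (ARG_MIN (\<lambda>i. L (Some i)) i. i \<in> M)"
  have e: "pivot M i (A, c) = (fst (pivot M i (A, c)), snd (pivot M i (A, c)))" by simp
  have e': "pivot M i (A, c') = (fst (pivot M i (A, c)), snd (pivot M i (A, c')))"
    using pivot_fst_indep by (metis prod.collapse)
  show ?case unfolding finloop.simps Let_def i_def[symmetric]
    by (subst e, subst e', rule Suc.IH)
qed

lemma curq_diag: "curq A i i = 1 - A i i" unfolding curq_def idm_def by simp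
lemma curq_off: "j \<noteq> i \<Longrightarrow> curq A j i = - A j i" unfolding curq_def idm_def by simp

abbreviation am :: "('a option \<Rightarrow> nat) \<Rightarrow> 'a set \<Rightarrow> 'a" where
  "am L M \<equiv> (ARG_MIN (\<lambda>i. L (Some i)) i. i \<in> M)"

lemma am_props: "i \<in> M \<Longrightarrow> am L M \<in> M \<and> (\<forall>j\<in>M. L (Some (am L M)) \<le> L (Some j))"
  using arg_min_nat_lemma[of "\<lambda>i. i \<in> M" i "\<lambda>i. L (Some i)"] by blast

lemma finloop_induct:
  assumes "finite M" "Inv M T"
    and step: "\<And>M T. finite M \<Longrightarrow> M \<noteq> {} \<Longrightarrow> Inv M T \<Longrightarrow> Inv (M - {am L M}) (pivot M (am L M) T)"
  shows "Inv {} (finloop L (card M) M T)"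
  using assms(1,2)
proof (induction "card M" arbitrary: M T)
  case 0 then show ?case by simp
next
  case (Suc n)
  then have ne: "M \<noteq> {}" by auto
  then obtain x where "x \<in> M" by blast
  then have amM: "am L M \<in> M" by (rule conjunct1[OF am_props])
  have c: "n = card (M - {am L M})" using Suc.hyps(2) amM Suc.prems(1) by simp
  have fM: "finite (M - {am L M})" using Suc.prems(1) by simp
  have "Inv {} (finloop L (card (M - {am L M})) (M - {am L M}) (pivot M (am L M) T))"
    by (rule Suc.hyps(1)[OF c fM step[OF Suc.prems(1) ne Suc.prems(2)]])
  then have "Inv {} (finloop L n (M - {am L M}) (pivot M (am L M) T))" by (simp only: c[symmetric])
  moreover have "finloop L (card M) M T = finloop L n (M - {am L M}) (pivot M (am L M) T)"
    by (simp only: Suc.hyps(2)[symmetric] finloop.simps Let_def)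
  ultimately show ?case by simp
qed

locale elim =
  fixes X :: "'a set" and L :: "'a option \<Rightarrow> nat"
  assumes finX: "finite X"
    and LinjX: "\<And>x y. x \<in> X \<Longrightarrow> y \<in> X \<Longrightarrow> L (Some x) = L (Some y) \<Longrightarrow> x = y"
begin

definition Inv :: "('a \<Rightarrow> real) \<Rightarrow> 'a set \<Rightarrow> ('a \<Rightarrow> 'a \<Rightarrow> real) \<times> ('a \<Rightarrow> real) \<Rightarrow> bool" where
  "Inv w M T = (let A = fst T; c = snd T in
     M \<subseteq> X \<and> (\<forall>l\<in>X-M. \<forall>j\<in>M. L (Some l) < L (Some j)) \<and>
     (\<forall>j\<in>X. (\<Sum>l\<in>X. A j l * w l) = c j \<and> c j > 0) \<and>
     (\<forall>j\<in>M. \<forall>l\<in>X. l \<noteq> j \<longrightarrow> A j l \<le> 0) \<and>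
     (\<forall>j\<in>X. \<forall>l\<in>X-M. l \<noteq> j \<and> (j \<in> M \<or> L (Some l) < L (Some j)) \<longrightarrow> A j l = 0) \<and>
     (\<forall>j\<in>X-M. A j j = 1))"

lemma Inv_step:
  assumes wpos: "\<forall>l\<in>X. 0 < w l" and ne: "M \<noteq> {}" and inv: "Inv w M (A, c)"
  shows "Inv w (M - {am L M}) (pivot M (am L M) (A, c))"
proof -
  define i where "i = am L M"
  have MX: "M \<subseteq> X" and ord: "\<forall>l\<in>X-M. \<forall>j\<in>M. L (Some l) < L (Some j)"
    and row: "\<And>j. j \<in> X \<Longrightarrow> (\<Sum>l\<in>X. A j l * w l) = c j" and cpos: "\<And>j. j \<in> X \<Longrightarrow> c j > 0"
    and I1: "\<And>j l. j \<in> M \<Longrightarrow> l \<in> X \<Longrightarrow> l \<noteq> j \<Longrightarrow> A j l \<le> 0"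
    and I2: "\<And>j l. j \<in> X \<Longrightarrow> l \<in> X-M \<Longrightarrow> l \<noteq> j \<Longrightarrow> j \<in> M \<or> L (Some l) < L (Some j) \<Longrightarrow> A j l = 0"
    and I3: "\<And>j. j \<in> X-M \<Longrightarrow> A j j = 1"
    using inv unfolding Inv_def Let_def by auto
  obtain x where "x \<in> M" using ne by blast
  then have iM: "i \<in> M" and imin: "\<And>j. j \<in> M \<Longrightarrow> L (Some i) \<le> L (Some j)"
    unfolding i_def using conjunct1[OF am_props] conjunct2[OF am_props] by (metis, metis)
  have iX: "i \<in> X" using iM MX by auto
  have ilt: "L (Some i) < L (Some j)" if "j \<in> M - {i}" for j
    using imin[of j] that LinjX[of i j] iX MX by fastforce
  have Aii: "A i i > 0"
  proof -
    have "(\<Sum>l\<in>X. A i l * w l) = A i i * w i + (\<Sum>l\<in>X-{i}. A i l * w l)"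
      using iX finX by (simp add: sum.remove)
    moreover have "(\<Sum>l\<in>X-{i}. A i l * w l) \<le> 0"
      using I1[OF iM] wpos by (intro sum_nonpos) (auto intro: mult_nonpos_nonneg less_imp_le)
    ultimately have "A i i * w i > 0" using row[OF iX] cpos[OF iX] by linarith
    moreover have "w i > 0" using wpos iX by blast
    ultimately show ?thesis by (simp add: zero_less_mult_iff)
  qed
  define a where "a = 1 / A i i"
  have apos: "a > 0" using Aii a_def by simp
  have ca: "1 / (1 - curq A i i) = a" unfolding a_def curq_diag by simp
  define A' where "A' = fst (pivot M i (A, c))"
  define c' where "c' = snd (pivot M i (A, c))"
  have A'i: "A' i l = a * A i l" for l unfolding A'_def pivot_fst ca by simp
  have A'j: "A' j l = A j l - A j i * (a * A i l)" if "j \<in> M - {i}" for j l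
    unfolding A'_def pivot_fst ca using that by (simp add: curq_off)
  have A'o: "A' j l = A j l" if "j \<notin> M" for j l
    unfolding A'_def pivot_fst ca using that iM by auto
  have c'i: "c' i = a * c i" unfolding c'_def pivot_snd ca by simp
  have c'j: "c' j = c j - A j i * (a * c i)" if "j \<in> M - {i}" for j
    unfolding c'_def pivot_snd ca using that by (simp add: curq_off)
  have c'o: "c' j = c j" if "j \<notin> M" for j
    unfolding c'_def pivot_snd ca using that iM by auto
  have Aji: "A j i \<le> 0" if "j \<in> M - {i}" for j using I1[of j i] that iX by auto
  let ?M' = "M - {i}"
  have s1: "?M' \<subseteq> X" using MX by auto
  have s2: "\<forall>l\<in>X-?M'. \<forall>j\<in>?M'. L (Some l) < L (Some j)"
    using ord ilt by (metis DiffE DiffI insertE insert_Diff iM)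
  have s3: "\<forall>j\<in>X. (\<Sum>l\<in>X. A' j l * w l) = c' j \<and> c' j > 0"
  proof
    fix j assume jX: "j \<in> X"
    consider "j = i" | "j \<in> M - {i}" | "j \<notin> M" by blast
    then show "(\<Sum>l\<in>X. A' j l * w l) = c' j \<and> c' j > 0"
    proof cases
      case 1
      have "(\<Sum>l\<in>X. A' j l * w l) = a * (\<Sum>l\<in>X. A i l * w l)"
        unfolding 1 A'i by (simp add: sum_distrib_left mult.assoc)
      then show ?thesis using row[OF iX] cpos[OF iX] apos 1 c'i by simp
    next
      case 2
      have "(\<Sum>l\<in>X. A' j l * w l) = (\<Sum>l\<in>X. A j l * w l - (A j i * a) * (A i l * w l))"
        unfolding A'j[OF 2] by (intro sum.cong refl) (simp add: algebra_simps)
      also have "\<dots> = (\<Sum>l\<in>X. A j l * w l) - (A j i * a) * (\<Sum>l\<in>X. A i l * w l)"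
        by (simp add: sum_subtractf sum_distrib_left)
      finally have "(\<Sum>l\<in>X. A' j l * w l) = (\<Sum>l\<in>X. A j l * w l) - A j i * (a * (\<Sum>l\<in>X. A i l * w l))"
        by simp
      then have "(\<Sum>l\<in>X. A' j l * w l) = c' j" using row[OF iX] row[OF jX] c'j[OF 2] by simp
      moreover have "c' j > 0"
      proof -
        have "a * c i > 0" using apos cpos[OF iX] by simp
        then have "- A j i * (a * c i) \<ge> 0" using Aji[OF 2] by (metis less_imp_le mult_nonneg_nonneg neg_0_le_iff_le)
        then show ?thesis using c'j[OF 2] cpos[OF jX] by simp
      qed
      ultimately show ?thesis by simp
    next
      case 3
      then show ?thesis using row[OF jX] cpos[OF jX] A'o c'o by simp
    qed
  qed
  have s4: "\<forall>j\<in>?M'. \<forall>l\<in>X. l \<noteq> j \<longrightarrow> A' j l \<le> 0"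
  proof (intro ballI impI)
    fix j l assume j: "j \<in> ?M'" and l: "l \<in> X" "l \<noteq> j"
    show "A' j l \<le> 0"
    proof (cases "l = i")
      case True then show ?thesis using A'j[OF j] apos Aii by (simp add: a_def)
    next
      case False
      have "A j l \<le> 0" using I1[of j l] j l by auto
      moreover have "A i l \<le> 0" using I1[OF iM l(1) False] .
      ultimately have "- A j i * (a * A i l) \<le> 0" using Aji[OF j] apos
        by (simp add: mult_nonneg_nonpos mult_nonpos_nonpos)
      then show ?thesis using A'j[OF j] \<open>A j l \<le> 0\<close> by simp
    qed
  qed
  have s5: "\<forall>j\<in>X. \<forall>l\<in>X-?M'. l \<noteq> j \<and> (j \<in> ?M' \<or> L (Some l) < L (Some j)) \<longrightarrow> A' j l = 0"
  proof (intro ballI impI)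
    fix j l assume jX: "j \<in> X" and l: "l \<in> X - ?M'" and c: "l \<noteq> j \<and> (j \<in> ?M' \<or> L (Some l) < L (Some j))"
    consider "j = i" | "j \<in> M - {i}" | "j \<notin> M" by blast
    then show "A' j l = 0"
    proof cases
      case 1
      then have "L (Some l) < L (Some i)" "l \<noteq> i" using c by auto
      then have "l \<in> X - M" using l by auto
      then show ?thesis using I2[OF iX _ \<open>l \<noteq> i\<close>] iM A'i 1 by simp
    next
      case 2
      show ?thesis
      proof (cases "l = i")
        case True then show ?thesis using A'j[OF 2] Aii by (simp add: a_def)
      next
        case False
        then have lXM: "l \<in> X - M" using l by auto
        have "A j l = 0" using I2[OF jX lXM] c 2 by auto
        moreover have "A i l = 0" using I2[OF iX lXM False] iM by auto
        ultimately show ?thesis using A'j[OF 2] by simp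
      qed
    next
      case 3
      then have jXM: "j \<in> X - M" using jX by auto
      have "l \<noteq> i"
      proof
        assume "l = i"
        then have "L (Some i) < L (Some j)" using c 3 by auto
        moreover have "L (Some j) < L (Some i)" using ord jXM iM by auto
        ultimately show False by simp
      qed
      then have lXM: "l \<in> X - M" using l by auto
      have "L (Some l) < L (Some j)" using c 3 by auto
      then show ?thesis using I2[OF jX lXM] c A'o[OF 3] by auto
    qed
  qed
  have s6: "\<forall>j\<in>X-?M'. A' j j = 1"
  proof
    fix j assume j: "j \<in> X - ?M'"
    show "A' j j = 1"
    proof (cases "j = i")
      case True then show ?thesis using A'i Aii by (simp add: a_def)
    next
      case False then have "j \<in> X - M" using j by auto
      then show ?thesis using A'o I3 by auto
    qed
  qed
  show ?thesis unfolding Inv_def Let_def i_def[symmetric] A'_def[symmetric] c'_def[symmetric]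
    using s1 s2 s3 s4 s5 s6 by blast
qed

definition VInv :: "('a \<Rightarrow> real) \<Rightarrow> nat \<Rightarrow> 'a set \<Rightarrow> ('a \<Rightarrow> 'a \<Rightarrow> real) \<times> ('a \<Rightarrow> real) \<Rightarrow> bool" where
  "VInv f m M T = (M \<subseteq> X \<and> (\<forall>l\<in>X-M. \<forall>j\<in>M. L (Some l) < L (Some j)) \<and>
     (\<forall>j\<in>X. L (Some j) < m \<longrightarrow> (\<Sum>l\<in>X. fst T j l * f l) = snd T j))"

lemma VInv_step:
  assumes ne: "M \<noteq> {}" and inv: "VInv f m M T"
  shows "VInv f m (M - {am L M}) (pivot M (am L M) T)"
proof -
  obtain A c where T: "T = (A, c)" by (cases T)
  define i where "i = am L M"
  have MX: "M \<subseteq> X" and ord: "\<forall>l\<in>X-M. \<forall>j\<in>M. L (Some l) < L (Some j)"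
    and row: "\<And>j. j \<in> X \<Longrightarrow> L (Some j) < m \<Longrightarrow> (\<Sum>l\<in>X. A j l * f l) = c j"
    using inv unfolding VInv_def T by auto
  obtain x where "x \<in> M" using ne by blast
  then have iM: "i \<in> M" and imin: "\<And>j. j \<in> M \<Longrightarrow> L (Some i) \<le> L (Some j)"
    unfolding i_def using conjunct1[OF am_props] conjunct2[OF am_props] by (metis, metis)
  have iX: "i \<in> X" using iM MX by auto
  have ilt: "L (Some i) < L (Some j)" if "j \<in> M - {i}" for j
    using imin[of j] that LinjX[of i j] iX MX by fastforce
  define a where "a = 1 / (1 - curq A i i)"
  define A' where "A' = fst (pivot M i (A, c))"
  define c' where "c' = snd (pivot M i (A, c))"
  have A'i: "A' i l = a * A i l" for l unfolding A'_def pivot_fst a_def by simp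
  have A'j: "A' j l = A j l + curq A j i * (a * A i l)" if "j \<in> M - {i}" for j l
    unfolding A'_def pivot_fst a_def using that by simp
  have A'o: "A' j l = A j l" if "j \<notin> M" for j l
    unfolding A'_def pivot_fst using that iM by auto
  have c'i: "c' i = a * c i" unfolding c'_def pivot_snd a_def by simp
  have c'j: "c' j = c j + curq A j i * (a * c i)" if "j \<in> M - {i}" for j
    unfolding c'_def pivot_snd a_def using that by simp
  have c'o: "c' j = c j" if "j \<notin> M" for j
    unfolding c'_def pivot_snd using that iM by auto
  let ?M' = "M - {i}"
  have s2: "\<forall>l\<in>X-?M'. \<forall>j\<in>?M'. L (Some l) < L (Some j)"
    using ord ilt by (metis DiffE DiffI insertE insert_Diff iM)
  have s3: "\<forall>j\<in>X. L (Some j) < m \<longrightarrow> (\<Sum>l\<in>X. A' j l * f l) = c' j"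
  proof (intro ballI impI)
    fix j assume jX: "j \<in> X" and jm: "L (Some j) < m"
    consider "j = i" | "j \<in> M - {i}" | "j \<notin> M" by blast
    then show "(\<Sum>l\<in>X. A' j l * f l) = c' j"
    proof cases
      case 1
      have "(\<Sum>l\<in>X. A' j l * f l) = a * (\<Sum>l\<in>X. A i l * f l)"
        unfolding 1 A'i by (simp add: sum_distrib_left mult.assoc)
      then show ?thesis using row[OF iX] jm 1 c'i by simp
    next
      case 2
      have im: "L (Some i) < m" using ilt[OF 2] jm by simp
      have "(\<Sum>l\<in>X. A' j l * f l) = (\<Sum>l\<in>X. A j l * f l + (curq A j i * a) * (A i l * f l))"
        unfolding A'j[OF 2] by (intro sum.cong refl) (simp add: algebra_simps)
      also have "\<dots> = (\<Sum>l\<in>X. A j l * f l) + (curq A j i * a) * (\<Sum>l\<in>X. A i l * f l)"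
        by (simp add: sum.distrib sum_distrib_left)
      finally have "(\<Sum>l\<in>X. A' j l * f l) = (\<Sum>l\<in>X. A j l * f l) + curq A j i * (a * (\<Sum>l\<in>X. A i l * f l))"
        by simp
      then show ?thesis using row[OF iX im] row[OF jX jm] c'j[OF 2] by simp
    next
      case 3 then show ?thesis using row[OF jX jm] A'o c'o by simp
    qed
  qed
  show ?thesis unfolding VInv_def T i_def[symmetric] A'_def[symmetric] c'_def[symmetric]
    using MX s2 s3 by auto
qed

end



context bsetup
begin

lemma LinjN: "k \<in> I \<Longrightarrow> x \<in> N k \<Longrightarrow> y \<in> N k \<Longrightarrow> L (Some x) = L (Some y) \<Longrightarrow> x = y"
  using Linj unfolding Nall_def by blast

lemma elimN: "k \<in> I \<Longrightarrow> elim (N k) L"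
  unfolding elim_def using finN LinjN by blast

definition A0 :: "'a \<Rightarrow> 'a \<Rightarrow> real" where "A0 = (\<lambda>i j. idm i j - q i j)"

lemma fin_struct:
  assumes k: "k \<in> I"
  shows "\<forall>j\<in>N k. fst (fin_tab N q r L k) j j = 1"
    and "\<forall>j\<in>N k. \<forall>l\<in>N k. l \<noteq> j \<and> L (Some l) < L (Some j) \<longrightarrow> fst (fin_tab N q r L k) j l = 0"
proof -
  interpret E: elim "N k" L by (rule elimN[OF k])
  define c0 where "c0 j = (\<Sum>l\<in>N k. A0 j l * wv l)" for j
  have wpos: "\<forall>l\<in>N k. 0 < wv l" using wv_ge1[OF k] by fastforce
  have c0pos: "c0 j > 0" if j: "j \<in> N k" for j
  proof -
    have "c0 j = (\<Sum>l\<in>N k. idm j l * wv l) - (\<Sum>l\<in>N k. q j l * wv l)"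
      unfolding c0_def A0_def by (simp add: left_diff_distrib sum_subtractf)
    also have "\<dots> = wv j - (\<Sum>l\<in>N k. q j l * wv l)" using idm_sum_left[OF finN[OF k] j] by simp
    finally show ?thesis using wv_q[OF k j] by simp
  qed
  have I0: "E.Inv wv (N k) (A0, c0)"
    unfolding E.Inv_def Let_def using c0pos qnn k
    by (auto simp: c0_def A0_def idm_def)
  have "E.Inv wv {} (finloop L (card (N k)) (N k) (A0, c0))"
  proof (rule finloop_induct[where Inv = "E.Inv wv", OF finN[OF k] I0])
    fix M T assume "finite M" "M \<noteq> {}" "E.Inv wv M T"
    then show "E.Inv wv (M - {am L M}) (pivot M (am L M) T)"
      using E.Inv_step[OF wpos] by (metis prod.collapse)
  qed
  moreover have "fst (finloop L (card (N k)) (N k) (A0, c0)) = fst (fin_tab N q r L k)"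
    unfolding fin_tab_def A0_def by (rule finloop_fst_indep)
  ultimately have F: "E.Inv wv {} (fst (fin_tab N q r L k), snd (finloop L (card (N k)) (N k) (A0, c0)))"
    by (metis prod.collapse)
  show "\<forall>j\<in>N k. fst (fin_tab N q r L k) j j = 1" using F unfolding E.Inv_def Let_def by simp
  show "\<forall>j\<in>N k. \<forall>l\<in>N k. l \<noteq> j \<and> L (Some l) < L (Some j) \<longrightarrow> fst (fin_tab N q r L k) j l = 0"
    using F unfolding E.Inv_def Let_def by simp
qed

lemma fin_row:
  assumes k: "k \<in> I"
    and rows: "\<And>j. j \<in> N k \<Longrightarrow> L (Some j) < m \<Longrightarrow> (\<Sum>l\<in>N k. (idm j l - q j l) * f l) = r j"
  shows "\<And>j. j \<in> N k \<Longrightarrow> L (Some j) < m \<Longrightarrow>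
     (\<Sum>l\<in>N k. fst (fin_tab N q r L k) j l * f l) = snd (fin_tab N q r L k) j"
proof -
  interpret E: elim "N k" L by (rule elimN[OF k])
  have I0: "E.VInv f m (N k) (A0, r)"
    unfolding E.VInv_def using rows by (auto simp: A0_def)
  have "E.VInv f m {} (finloop L (card (N k)) (N k) (A0, r))"
  proof (rule finloop_induct[where Inv = "E.VInv f m", OF finN[OF k] I0])
    fix M T assume a: "M \<noteq> {}" "E.VInv f m M T" and "finite M"
    show "E.VInv f m (M - {am L M}) (pivot M (am L M) T)" by (rule E.VInv_step[OF a])
  qed
  then have F: "E.VInv f m {} (fin_tab N q r L k)" unfolding fin_tab_def A0_def .
  fix j assume "j \<in> N k" "L (Some j) < m"
  then show "(\<Sum>l\<in>N k. fst (fin_tab N q r L k) j l * f l) = snd (fin_tab N q r L k) j"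
    using F unfolding E.VInv_def by blast
qed

abbreviation "qt \<equiv> qtil K N q r L"
abbreviation "rt \<equiv> rtil K N q r L"

lemma qt_diag: "k \<in> I \<Longrightarrow> i \<in> N k \<Longrightarrow> qt i i = 0"
  unfolding qtil_def curq_def using fin_struct(1) bidx_eq by (simp add: idm_def)

lemma qt_low: "k \<in> I \<Longrightarrow> i \<in> N k \<Longrightarrow> j \<in> N k \<Longrightarrow> j \<noteq> i \<Longrightarrow> L (Some j) < L (Some i) \<Longrightarrow> qt i j = 0"
  unfolding qtil_def curq_def using fin_struct(2) bidx_eq by (simp add: idm_def)

lemma key_tab:
  assumes k: "k \<in> I" and i: "i \<in> N k" and im: "L (Some i) < m"
    and rows: "\<And>j. j \<in> N k \<Longrightarrow> L (Some j) < m \<Longrightarrow> (\<Sum>l\<in>N k. (idm j l - q j l) * f l) = r j"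
  shows "f i = rt i + (\<Sum>l\<in>N k - {i}. qt i l * f l)"
proof -
  define A where "A = fst (fin_tab N q r L k)"
  have bi: "bidx K N i = k" using bidx_eq[OF k i] .
  have qA: "qt i l = - A i l" if "l \<noteq> i" for l
    unfolding qtil_def bi A_def curq_def using that by (simp add: idm_def)
  have rA: "rt i = snd (fin_tab N q r L k) i" unfolding rtil_def bi ..
  have "(\<Sum>l\<in>N k. A i l * f l) = snd (fin_tab N q r L k) i"
    using fin_row[OF k rows i im] unfolding A_def .
  then have eq: "(\<Sum>l\<in>N k. A i l * f l) = rt i" using rA by simp
  have "(\<Sum>l\<in>N k. A i l * f l) = A i i * f i + (\<Sum>l\<in>N k - {i}. A i l * f l)"
    using i finN[OF k] by (simp add: sum.remove)
  also have "A i i = 1" using fin_struct(1)[OF k] i unfolding A_def by blast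
  also have "(\<Sum>l\<in>N k - {i}. A i l * f l) = - (\<Sum>l\<in>N k - {i}. qt i l * f l)"
    using qA by (simp add: sum_negf[symmetric])
  finally show ?thesis using eq by simp
qed

end



context bsetup
begin

lemma PiE_S:
  assumes g: "g \<in> PiE I N" shows "g ` I \<in> S"
proof -
  have sub: "g ` I \<subseteq> Nall K N" unfolding Nall_def using PiE_mem[OF g] by blast
  have U: "\<exists>!x. x \<in> g ` I \<and> x \<in> N k" if k: "k \<in> I" for k
  proof (rule ex1I[of _ "g k"])
    show "g k \<in> g ` I \<and> g k \<in> N k" using PiE_mem[OF g k] k by blast
    fix y assume y: "y \<in> g ` I \<and> y \<in> N k"
    then obtain p where p: "p \<in> I" "y = g p" by blast
    have "g p \<in> N p" using PiE_mem[OF g p(1)] .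
    then have "p = k" using disjD[OF p(1) k] y p(2) by simp
    then show "y = g k" using p by simp
  qed
  show ?thesis unfolding multistates_def by (intro CollectI conjI sub ballI U)
qed

lemma comp_img:
  assumes g: "g \<in> PiE I N" and p: "p \<in> I" shows "comp N (g ` I) p = g p"
  using comp_eq[OF PiE_S[OF g] p _ PiE_mem[OF g p]] p by blast

lemma PiE_upd:
  assumes h: "h \<in> PiE (I - {k}) N" and k: "k \<in> I" and x: "x \<in> N k"
  shows "h(k := x) \<in> PiE I N"
  using h k x unfolding PiE_def Pi_def extensional_def by auto

lemma PiE_upd2:
  assumes g: "g \<in> PiE I N" and k: "k \<in> I" and x: "x \<in> N k"
  shows "g(k := x) \<in> PiE I N"
  using g k x unfolding PiE_def Pi_def extensional_def by auto

lemma upd_img: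
  assumes g: "g \<in> PiE I N" and k: "k \<in> I" and j: "j \<in> N k"
  shows "insert j (g ` I - {g k}) = (g(k := j)) ` I"
proof -
  have gN: "\<And>p. p \<in> I \<Longrightarrow> g p \<in> N p" using PiE_mem[OF g] .
  have ne: "g p \<noteq> g k" if "p \<in> I" "p \<noteq> k" for p
    using gN[OF that(1)] gN[OF k] disjD[OF that(1) k] that(2) by auto
  show ?thesis
  proof (intro equalityI subsetI)
    fix x assume "x \<in> insert j (g ` I - {g k})"
    then have "x = j \<or> (\<exists>p\<in>I. x = g p \<and> p \<noteq> k)" by blast
    then show "x \<in> (g(k := j)) ` I"
    proof
      assume "x = j" then show ?thesis using k by (intro image_eqI[of _ _ k]) auto
    next
      assume "\<exists>p\<in>I. x = g p \<and> p \<noteq> k"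
      then obtain p where "p \<in> I" "x = g p" "p \<noteq> k" by blast
      then show ?thesis by (intro image_eqI[of _ _ p]) auto
    qed
  next
    fix x assume "x \<in> (g(k := j)) ` I"
    then obtain p where p: "p \<in> I" "x = (g(k := j)) p" by blast
    then show "x \<in> insert j (g ` I - {g k})" using ne[OF p(1)] by (cases "p = k") auto
  qed
qed

lemma PiE_split:
  assumes k: "k \<in> I"
  shows "(\<Sum>g\<in>PiE I N. G g) = (\<Sum>x\<in>N k. \<Sum>h\<in>PiE (I - {k}) N. G (h(k := x)))"
proof -
  have e: "PiE I N = PiE (insert k (I - {k})) N" using k by (simp add: insert_absorb)
  have "(\<Sum>g\<in>PiE (insert k (I - {k})) N. G g) = (\<Sum>(x, h)\<in>N k \<times> PiE (I - {k}) N. G (h(k := x)))"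
    by (intro sum.reindex_bij_witness[of _ "\<lambda>(y,g). g(k := y)" "\<lambda>g. (g k, g(k := undefined))"])
       (auto simp: PiE_def extensional_def)
  also have "\<dots> = (\<Sum>x\<in>N k. \<Sum>h\<in>PiE (I - {k}) N. G (h(k := x)))"
    by (rule sum.cartesian_product[symmetric])
  finally show ?thesis unfolding e .
qed

lemma sum_prod_split:
  assumes k: "k \<in> I"
  shows "(\<Sum>g\<in>PiE I N. (\<Prod>p\<in>I. z (g p)) * VV (g ` I))
       = (\<Sum>h\<in>PiE (I - {k}) N. (\<Prod>p\<in>I-{k}. z (h p)) * (\<Sum>x\<in>N k. z x * VV ((h(k := x)) ` I)))"
proof -
  have pr: "(\<Prod>p\<in>I. z ((h(k := x)) p)) = z x * (\<Prod>p\<in>I-{k}. z (h p))" for h x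
  proof -
    have "(\<Prod>p\<in>I. z ((h(k := x)) p)) = z ((h(k := x)) k) * (\<Prod>p\<in>I-{k}. z ((h(k := x)) p))"
      using k by (subst prod.remove[of I k]) auto
    also have "(\<Prod>p\<in>I-{k}. z ((h(k := x)) p)) = (\<Prod>p\<in>I-{k}. z (h p))" by (intro prod.cong) auto
    finally show ?thesis by simp
  qed
  have "(\<Sum>g\<in>PiE I N. (\<Prod>p\<in>I. z (g p)) * VV (g ` I))
      = (\<Sum>x\<in>N k. \<Sum>h\<in>PiE (I - {k}) N. z x * (\<Prod>p\<in>I-{k}. z (h p)) * VV ((h(k := x)) ` I))"
    unfolding PiE_split[OF k] pr ..
  also have "\<dots> = (\<Sum>h\<in>PiE (I - {k}) N. \<Sum>x\<in>N k. z x * (\<Prod>p\<in>I-{k}. z (h p)) * VV ((h(k := x)) ` I))"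
    by (rule sum.swap)
  also have "\<dots> = (\<Sum>h\<in>PiE (I - {k}) N. (\<Prod>p\<in>I-{k}. z (h p)) * (\<Sum>x\<in>N k. z x * VV ((h(k := x)) ` I)))"
    by (simp add: sum_distrib_left mult_ac)
  finally show ?thesis .
qed

end



context bsetup
begin

lemma L_range: "j \<in> Nall K N \<Longrightarrow> L (Some j) \<in> {1..card (Nall K N)}"
proof -
  assume j: "j \<in> Nall K N"
  have "L (Some j) \<in> {1..card (Nall K N) + 1}" using lab j unfolding labeling_def by blast
  moreover have "L (Some j) \<noteq> L None"
  proof
    assume "L (Some j) = L None"
    then have "Some j = None" using lab j unfolding labeling_def inj_on_def by blast
    then show False by simp
  qed
  moreover have "L None = card (Nall K N) + 1" using lab unfolding labeling_def by blast
  ultimately show ?thesis by auto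
qed

lemma L_surj:
  assumes n: "n \<in> {1..card (Nall K N)}" shows "\<exists>i\<in>Nall K N. L (Some i) = n"
proof -
  define Ls where "Ls = (\<lambda>x. L (Some x)) ` Nall K N"
  have inj: "inj_on (\<lambda>x. L (Some x)) (Nall K N)" unfolding inj_on_def using Linj by blast
  have c: "card Ls = card (Nall K N)" unfolding Ls_def using card_image[OF inj] .
  have sub: "Ls \<subseteq> {1..card (Nall K N)}" unfolding Ls_def using L_range by blast
  have "Ls = {1..card (Nall K N)}" using card_subset_eq[OF _ sub] c by simp
  then have "n \<in> Ls" using n by simp
  then show ?thesis unfolding Ls_def by (auto simp del: atLeastAtMost_iff)
qed

lemma THE_label:
  assumes n: "n \<in> {1..card (Nall K N)}"
  shows "(THE i. i \<in> Nall K N \<and> L (Some i) = n) \<in> Nall K N \<and> L (Some (THE i. i \<in> Nall K N \<and> L (Some i) = n)) = n"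
proof -
  obtain i where i: "i \<in> Nall K N" "L (Some i) = n" using L_surj[OF n] by blast
  have "(THE i. i \<in> Nall K N \<and> L (Some i) = n) = i"
    using i Linj by (intro the_equality) auto
  then show ?thesis using i by simp
qed

definition Ev :: "'a set \<Rightarrow> nat \<Rightarrow> real \<times> ('a \<Rightarrow> real) \<Rightarrow> bool" where
  "Ev sh n st = (fst st + (\<Sum>g\<in>PiE I N. (\<Prod>p\<in>I. snd st (g p)) * VV (g ` I)) = VV sh \<and>
      (\<forall>j\<in>Nall K N. L (Some j) < n \<longrightarrow> snd st j = 0))"

lemma finI: "finite I" by simp

lemma Ev_step:
  assumes n: "n \<in> {1..card (Nall K N)}" and inv: "Ev sh n (V, y)"
  shows "Ev sh (Suc n) (evstep K N qt rt L n (V, y))"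
proof -
  define i where "i = (THE i. i \<in> Nall K N \<and> L (Some i) = n)"
  have iN: "i \<in> Nall K N" and Li: "L (Some i) = n" using THE_label[OF n] unfolding i_def by auto
  obtain k where k: "k \<in> I" and ik: "i \<in> N k" using iN unfolding Nall_def by blast
  have bk: "bidx K N i = k" using bidx_eq[OF k ik] .
  define y' where "y' = (\<lambda>j. if j \<in> N k - {i} then y j + y i * qt i j else if j = i then 0 else y j)"
  define PP where "PP = (\<Prod>p\<in>I - {k}. \<Sum>j\<in>N p. y j)"
  have ev: "evstep K N qt rt L n (V, y) = (V + rt i * y i * PP, y')"
    unfolding evstep_def Let_def i_def[symmetric] bk y'_def PP_def by (simp cong: if_cong)
  have inv1: "V + (\<Sum>g\<in>PiE I N. (\<Prod>p\<in>I. y (g p)) * VV (g ` I)) = VV sh"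
    and E2: "\<And>j. j \<in> Nall K N \<Longrightarrow> L (Some j) < n \<Longrightarrow> y j = 0"
    using inv unfolding Ev_def by auto
  define Wh where "Wh h x = VV ((h(k := x)) ` I)" for h x
  have hpN: "h p \<in> N p" if "h \<in> PiE (I - {k}) N" "p \<in> I - {k}" for h p
    using PiE_mem[OF that] .
  have hpNk: "h p \<notin> N k" if "h \<in> PiE (I - {k}) N" "p \<in> I - {k}" for h p
    using hpN[OF that] disjD[of p k] that(2) k by blast
  have key: "(\<Sum>x\<in>N k. y x * Wh h x) = y i * rt i + (\<Sum>x\<in>N k. y' x * Wh h x)"
    if h: "h \<in> PiE (I - {k}) N" and nz: "(\<Prod>p\<in>I-{k}. y (h p)) \<noteq> 0" for h
  proof -
    have hp: "y (h p) \<noteq> 0" if "p \<in> I - {k}" for p using nz that by (simp add: prod_zero_iff)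
    have Lh: "n < L (Some (h p))" if p: "p \<in> I - {k}" for p
    proof -
      have hN: "h p \<in> Nall K N" using hpN[OF h p] p unfolding Nall_def by blast
      have "\<not> L (Some (h p)) < n" using E2[OF hN] hp[OF p] by blast
      moreover have "h p \<noteq> i" using hpNk[OF h p] ik by blast
      then have "L (Some (h p)) \<noteq> n" using Linj[OF hN iN] Li by metis
      ultimately show ?thesis by simp
    qed
    define f where "f x = Wh h x" for x
    have rows: "(\<Sum>l\<in>N k. (idm j l - q j l) * f l) = r j"
      if j: "j \<in> N k" and jl: "L (Some j) < Suc n" for j
    proof -
      define g where "g = h(k := j)"
      have g: "g \<in> PiE I N" unfolding g_def using PiE_upd[OF h k j] .
      have cs: "comp N (g ` I) p = g p" if "p \<in> I" for p using comp_img[OF g that] .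
      have pr: "prio (g ` I) = k"
      proof (rule prio_char[OF PiE_S[OF g] k])
        fix p assume p: "p \<in> I" "p \<noteq> k"
        have "L (Some j) < L (Some (h p))" using Lh[of p] p jl by simp
        then show "L (Some (comp N (g ` I) k)) < L (Some (comp N (g ` I) p))"
          using cs[OF k] cs[OF p(1)] p(2) unfolding g_def by simp
      qed
      have b: "VV (g ` I) = r (comp N (g ` I) k) +
          (\<Sum>l\<in>N k. q (comp N (g ` I) k) l * VV (insert l (g ` I - {comp N (g ` I) k})))"
        by (rule bellman2[OF PiE_S[OF g] pr])
      have gk: "comp N (g ` I) k = j" using cs[OF k] unfolding g_def by simp
      have ins: "insert l (g ` I - {j}) = (h(k := l)) ` I" if "l \<in> N k" for l
        using upd_img[OF g k that] unfolding g_def by simp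
      have sumeq: "(\<Sum>l\<in>N k. q j l * VV (insert l (g ` I - {j}))) = (\<Sum>l\<in>N k. q j l * f l)"
      proof (rule sum.cong[OF refl])
        fix l assume l: "l \<in> N k"
        show "q j l * VV (insert l (g ` I - {j})) = q j l * f l"
          unfolding f_def Wh_def ins[OF l] ..
      qed
      have fjv: "f j = VV (g ` I)" unfolding f_def Wh_def g_def ..
      have fj: "f j = r j + (\<Sum>l\<in>N k. q j l * f l)"
        using b unfolding gk sumeq fjv .
      have "(\<Sum>l\<in>N k. (idm j l - q j l) * f l) = f j - (\<Sum>l\<in>N k. q j l * f l)"
        using idm_sum_left[OF finN[OF k] j, of f] by (simp add: left_diff_distrib sum_subtractf)
      then show ?thesis using fj by simp
    qed
    have iln: "L (Some i) < Suc n" using Li by simp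
    have fi: "f i = rt i + (\<Sum>l\<in>N k - {i}. qt i l * f l)"
      by (rule key_tab[OF k ik iln rows])
    have s1: "(\<Sum>x\<in>N k. y x * f x) = y i * f i + (\<Sum>x\<in>N k - {i}. y x * f x)"
      using ik finN[OF k] by (simp add: sum.remove)
    have s2: "(\<Sum>x\<in>N k. y' x * f x) = y' i * f i + (\<Sum>x\<in>N k - {i}. y' x * f x)"
      using ik finN[OF k] by (simp add: sum.remove)
    have y'i: "y' i = 0" unfolding y'_def by simp
    have s3: "(\<Sum>x\<in>N k - {i}. y' x * f x) = (\<Sum>x\<in>N k - {i}. y x * f x) + y i * (\<Sum>x\<in>N k - {i}. qt i x * f x)"
      unfolding y'_def by (simp add: sum.distrib sum_distrib_left algebra_simps)
    show ?thesis using s1 s2 s3 y'i fi unfolding f_def by (simp add: algebra_simps)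
  qed
  have Py': "(\<Prod>p\<in>I-{k}. y' (h p)) = (\<Prod>p\<in>I-{k}. y (h p))" if h: "h \<in> PiE (I - {k}) N" for h
  proof (rule prod.cong[OF refl])
    fix p assume p: "p \<in> I - {k}"
    have "h p \<notin> N k" using hpNk[OF h p] .
    moreover have "h p \<noteq> i" using hpNk[OF h p] ik by blast
    ultimately show "y' (h p) = y (h p)" unfolding y'_def by simp
  qed
  have PPe: "PP = (\<Sum>h\<in>PiE (I - {k}) N. \<Prod>p\<in>I-{k}. y (h p))"
    unfolding PP_def by (rule prod_sum_PiE) (auto intro: finN)
  have "(\<Sum>g\<in>PiE I N. (\<Prod>p\<in>I. y (g p)) * VV (g ` I))
      = (\<Sum>h\<in>PiE (I - {k}) N. (\<Prod>p\<in>I-{k}. y (h p)) * (\<Sum>x\<in>N k. y x * Wh h x))"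
    unfolding Wh_def by (rule sum_prod_split[OF k])
  also have "\<dots> = (\<Sum>h\<in>PiE (I - {k}) N. (\<Prod>p\<in>I-{k}. y (h p)) * (y i * rt i)
                    + (\<Prod>p\<in>I-{k}. y (h p)) * (\<Sum>x\<in>N k. y' x * Wh h x))"
  proof (rule sum.cong[OF refl])
    fix h assume h: "h \<in> PiE (I - {k}) N"
    show "(\<Prod>p\<in>I-{k}. y (h p)) * (\<Sum>x\<in>N k. y x * Wh h x) =
          (\<Prod>p\<in>I-{k}. y (h p)) * (y i * rt i) + (\<Prod>p\<in>I-{k}. y (h p)) * (\<Sum>x\<in>N k. y' x * Wh h x)"
    proof (cases "(\<Prod>p\<in>I-{k}. y (h p)) = 0")
      case True then show ?thesis by (simp only: True mult_zero_left add_0_left)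
    next
      case False then show ?thesis using key[OF h False] by (simp add: algebra_simps)
    qed
  qed
  also have "\<dots> = y i * rt i * PP + (\<Sum>h\<in>PiE (I - {k}) N. (\<Prod>p\<in>I-{k}. y (h p)) * (\<Sum>x\<in>N k. y' x * Wh h x))"
    unfolding PPe by (simp add: sum.distrib sum_distrib_left mult_ac)
  also have "(\<Sum>h\<in>PiE (I - {k}) N. (\<Prod>p\<in>I-{k}. y (h p)) * (\<Sum>x\<in>N k. y' x * Wh h x))
     = (\<Sum>h\<in>PiE (I - {k}) N. (\<Prod>p\<in>I-{k}. y' (h p)) * (\<Sum>x\<in>N k. y' x * Wh h x))"
  proof (rule sum.cong[OF refl])
    fix h assume h: "h \<in> PiE (I - {k}) N"
    show "(\<Prod>p\<in>I-{k}. y (h p)) * (\<Sum>x\<in>N k. y' x * Wh h x) = (\<Prod>p\<in>I-{k}. y' (h p)) * (\<Sum>x\<in>N k. y' x * Wh h x)"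
      unfolding Py'[OF h] ..
  qed
  also have "(\<Sum>h\<in>PiE (I - {k}) N. (\<Prod>p\<in>I-{k}. y' (h p)) * (\<Sum>x\<in>N k. y' x * Wh h x))
      = (\<Sum>g\<in>PiE I N. (\<Prod>p\<in>I. y' (g p)) * VV (g ` I))"
    unfolding Wh_def by (rule sum_prod_split[OF k, symmetric])
  finally have main: "(\<Sum>g\<in>PiE I N. (\<Prod>p\<in>I. y (g p)) * VV (g ` I))
      = y i * rt i * PP + (\<Sum>g\<in>PiE I N. (\<Prod>p\<in>I. y' (g p)) * VV (g ` I))" .
  have E2': "y' j = 0" if j: "j \<in> Nall K N" "L (Some j) < Suc n" for j
  proof (cases "j = i")
    case True then show ?thesis unfolding y'_def by simp
  next
    case False
    then have "L (Some j) \<noteq> n" using Linj[OF j(1) iN] Li by metis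
    then have jn: "L (Some j) < n" using j(2) by simp
    show ?thesis
    proof (cases "j \<in> N k")
      case True
      have "qt i j = 0" using qt_low[OF k ik True False] jn Li by simp
      then show ?thesis using E2[OF j(1) jn] True False unfolding y'_def by simp
    next
      case False2: False
      then show ?thesis using E2[OF j(1) jn] False unfolding y'_def by simp
    qed
  qed
  show ?thesis unfolding ev Ev_def using inv1 main E2' by (simp add: algebra_simps)
qed

end



context bsetup
begin

lemma Ev_init:
  assumes sh: "sh \<in> S"
  shows "Ev sh 1 (0, \<lambda>j. if j \<in> sh then 1 else 0)"
proof -
  define g0 where "g0 = restrict (comp N sh) I"
  have g0: "g0 \<in> PiE I N" unfolding g0_def using comp_props[OF sh] by auto
  define F where "F g = (\<Prod>p\<in>I. (if g p \<in> sh then 1 else 0 :: real)) * VV (g ` I)" for g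
  have F0: "F g = 0" if g: "g \<in> PiE I N - {g0}" for g
  proof -
    have "\<exists>p\<in>I. g p \<noteq> g0 p"
    proof (rule ccontr)
      assume "\<not> (\<exists>p\<in>I. g p \<noteq> g0 p)"
      then have "g = g0" using g g0 by (intro extensionalityI[of _ I]) (auto simp: PiE_def)
      then show False using g by simp
    qed
    then obtain p where p: "p \<in> I" "g p \<noteq> g0 p" by blast
    have "g p \<notin> sh"
    proof
      assume "g p \<in> sh"
      then have "comp N sh p = g p" using comp_eq[OF sh p(1)] PiE_mem[of g I N p] g p(1) by blast
      then show False using p unfolding g0_def by simp
    qed
    then have "(\<Prod>p\<in>I. (if g p \<in> sh then 1 else 0 :: real)) = 0"
      using p(1) by (intro prod_zero) auto
    then show ?thesis unfolding F_def by simp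
  qed
  have "(\<Sum>g\<in>PiE I N. F g) = F g0"
  proof -
    have "(\<Sum>g\<in>PiE I N. F g) = F g0 + (\<Sum>g\<in>PiE I N - {g0}. F g)"
      using g0 by (intro sum.remove) (auto intro!: finite_PiE finN)
    also have "(\<Sum>g\<in>PiE I N - {g0}. F g) = 0" using F0 by simp
    finally show ?thesis by simp
  qed
  moreover have "F g0 = VV sh"
  proof -
    have "(\<Prod>p\<in>I. (if g0 p \<in> sh then 1 else 0 :: real)) = 1"
      using comp_props[OF sh] unfolding g0_def by (intro prod.neutral) auto
    moreover have "g0 ` I = sh" using S_eq[OF sh] unfolding g0_def by simp
    ultimately show ?thesis unfolding F_def by simp
  qed
  moreover have "\<forall>j\<in>Nall K N. \<not> L (Some j) < 1" using L_range by fastforce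
  ultimately show ?thesis unfolding Ev_def F_def by simp
qed

lemma Ev_final:
  assumes "Ev sh (card (Nall K N) + 1) st" shows "fst st = VV sh"
proof -
  have y0: "snd st j = 0" if "j \<in> Nall K N" for j
    using assms L_range[OF that] that unfolding Ev_def by auto
  have Z: "(\<Prod>p\<in>I. snd st (g p)) = 0" if g: "g \<in> PiE I N" for g
  proof -
    have "1 \<in> I" using K by simp
    then have "g 1 \<in> Nall K N" using PiE_mem[OF g] unfolding Nall_def by blast
    then have "snd st (g 1) = 0" using y0 by blast
    then show ?thesis using \<open>1 \<in> I\<close> by (intro prod_zero[OF finI] bexI[of _ 1])
  qed
  have "(\<Sum>g\<in>PiE I N. (\<Prod>p\<in>I. snd st (g p)) * VV (g ` I)) = 0"
  proof (rule sum.neutral, rule ballI)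
    fix g assume g: "g \<in> PiE I N"
    show "(\<Prod>p\<in>I. snd st (g p)) * VV (g ` I) = 0" by (simp only: Z[OF g] mult_zero_left)
  qed
  then show ?thesis using assms unfolding Ev_def by simp
qed

lemma Ev_fold:
  assumes sh: "sh \<in> S"
  shows "1 \<le> m \<Longrightarrow> m \<le> card (Nall K N) + 1 \<Longrightarrow>
    Ev sh m (fold (evstep K N qt rt L) [1..<m] (0, \<lambda>j. if j \<in> sh then 1 else 0))"
proof (induction m)
  case 0 then show ?case by simp
next
  case (Suc m)
  show ?case
  proof (cases "m = 0")
    case True then show ?thesis using Ev_init[OF sh] by simp
  next
    case False
    then have m1: "1 \<le> m" by simp
    have e: "[1..<Suc m] = [1..<m] @ [m]" using m1 by simp
    have mr: "m \<in> {1..card (Nall K N)}" using m1 Suc.prems by simp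
    have "Ev sh m (fold (evstep K N qt rt L) [1..<m] (0, \<lambda>j. if j \<in> sh then 1 else 0))"
      using Suc.IH m1 Suc.prems by simp
    moreover obtain V y where Vy: "fold (evstep K N qt rt L) [1..<m] (0, \<lambda>j. if j \<in> sh then 1 else 0) = (V, y)"
      by (cases "fold (evstep K N qt rt L) [1..<m] (0, \<lambda>j. if j \<in> sh then 1 else 0)") auto
    moreover have "fold (evstep K N qt rt L) [1..<Suc m] (0, \<lambda>j. if j \<in> sh then 1 else 0)
        = evstep K N qt rt L m (fold (evstep K N qt rt L) [1..<m] (0, \<lambda>j. if j \<in> sh then 1 else 0))"
      unfolding e by simp
    ultimately show ?thesis using Ev_step[OF mr] by simp
  qed
qed

lemma evaluator_correct:
  assumes sh: "sh \<in> S" shows "evaluator K N q r L sh = VV sh"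
  unfolding evaluator_def using Ev_final[OF Ev_fold[OF sh]] by simp

end

theorem proposition4p2:
  fixes K :: nat and N :: "nat \<Rightarrow> 'a set" and q :: "'a \<Rightarrow> 'a \<Rightarrow> real"
    and r :: "'a \<Rightarrow> real" and L :: "'a option \<Rightarrow> nat" and shat :: "'a set"
  assumes K: "K \<ge> 1"
    and fin: "\<forall>k\<in>{1..K}. finite (N k) \<and> N k \<noteq> {}"
    and disj: "\<forall>k\<in>{1..K}. \<forall>l\<in>{1..K}. k \<noteq> l \<longrightarrow> N k \<inter> N l = {}"
    and C: "hypC K N q r"
    and shat: "shat \<in> multistates K N"
    and lab: "labeling K N L"
  shows "minvertible (multistates K N) (\<lambda>u v. idm u v - Qpol N q (priority K N L) u v)
       \<and> evaluator K N q r L shat = Vpol K N q r (priority K N L) shat"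
proof -
  interpret bsetup K N q r L
  proof
    show "K \<ge> 1" by (rule K)
    show "\<forall>k\<in>{1..K}. finite (N k) \<and> N k \<noteq> {}" by (rule fin)
    show "\<forall>k\<in>{1..K}. \<forall>l\<in>{1..K}. k \<noteq> l \<longrightarrow> N k \<inter> N l = {}" by (rule disj)
    show "\<forall>k\<in>{1..K}. \<forall>i\<in>N k. \<forall>j\<in>N k. 0 \<le> q i j" using C unfolding hypC_def by blast
    show "\<forall>k\<in>{1..K}. transient (N k) q" using C unfolding hypC_def by blast
    show "labeling K N L" by (rule lab)
  qed
  show ?thesis using Q_minvertible evaluator_correct[OF shat] by simp
qed



end
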